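(* In the setting of the context, $$\frac{\sum_{i=1}^a\frac N{n_i}(\boldsymbol T_W)_{ii}A_{i,1}-\sum_{i=1}^a\frac N{n_i}(\boldsymbol T_W)_{ii}\operatorname{tr}(\boldsymbol T_S\boldsymbol\Sigma_i)}{\sqrt{2\operatorname{tr}((\boldsymbol T\boldsymbol V_N)^2)}}\to0\quad\text{in probability}$$ as $\min(n_1,\dots,n_a)\to\infty$, irrespective of the behaviour of $d$ and $a$ (which may be fixed or depend arbitrarily on the sample sizes).
   Context: Let $a,d\in\mathbb N$, $n_1,\dots,n_a\ge2$, $N=\sum_i n_i$. Observations $\boldsymbol X_{i,j}\sim\mathcal N_d(\boldsymbol\mu_i,\boldsymbol\Sigma_i)$, $j=1,\dots,n_i$, $i=1,\dots,a$, mutually independent, $\boldsymbol\Sigma_i$ symmetric positive definite. Let $\boldsymbol T=\boldsymbol T_W\otimes\boldsymbol T_S$ with $\boldsymbol T_W\in\mathbb R^{a\times a}$, $\boldsymbol T_S\in\mathbb R^{d\times d}$ symmetric idempotent, and $\boldsymbol V_N=\bigoplus_{i=1}^a\frac N{n_i}\boldsymbol\Sigma_i$. Define $A_{i,1}=\frac1{2\binom{n_i}{2}}\sum_{1\le\ell_2<\ell_1\le n_i}(\boldsymbol X_{i,\ell_1}-\boldsymbol X_{i,\ell_2})^\top\boldsymbol T_S(\boldsymbol X_{i,\ell_1}-\boldsymbol X_{i,\ell_2})$. *)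

theory Defs
  imports "HOL-Probability.Probability"
begin

text \<open>Matrices are represented as functions of two indices, only entries with
  indices in the relevant finite index set matter. Indices start at 0.\<close>

definition sym_idem :: "nat \<Rightarrow> (nat \<Rightarrow> nat \<Rightarrow> real) \<Rightarrow> bool" where
  "sym_idem m T \<longleftrightarrow> (\<forall>p<m. \<forall>q<m. T p q = T q p) \<and>
     (\<forall>p<m. \<forall>q<m. (\<Sum>r<m. T p r * T r q) = T p q)"

definition quad_form :: "nat \<Rightarrow> (nat \<Rightarrow> nat \<Rightarrow> real) \<Rightarrow> (nat \<Rightarrow> real) \<Rightarrow> real" where
  "quad_form d A x = (\<Sum>l<d. \<Sum>m<d. x l * A l m * x m)"

definition sym_posdef :: "nat \<Rightarrow> (nat \<Rightarrow> nat \<Rightarrow> real) \<Rightarrow> bool" where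
  "sym_posdef d S \<longleftrightarrow> (\<forall>l<d. \<forall>m<d. S l m = S m l) \<and>
     (\<forall>x. (\<exists>l<d. x l \<noteq> 0) \<longrightarrow> quad_form d S x > 0)"

text \<open>Multivariate normal law N_d(mu, Sigma) (Sigma positive definite) of the random vector
  with coordinates X 0, ..., X (d-1), via the Cramer-Wold characterisation: every nontrivial
  linear combination c' X is univariate normal with mean c' mu and variance c' Sigma c.\<close>

definition mvn_distributed ::
  "'a measure \<Rightarrow> nat \<Rightarrow> (nat \<Rightarrow> 'a \<Rightarrow> real) \<Rightarrow> (nat \<Rightarrow> real) \<Rightarrow> (nat \<Rightarrow> nat \<Rightarrow> real) \<Rightarrow> bool" where
  "mvn_distributed M d X mu S \<longleftrightarrow>
     (\<forall>l<d. X l \<in> borel_measurable M) \<and>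
     (\<forall>c. (\<exists>l<d. c l \<noteq> 0) \<longrightarrow>
        distributed M lborel (\<lambda>\<omega>. \<Sum>l<d. c l * X l \<omega>)
          (\<lambda>x. ennreal (normal_density (\<Sum>l<d. c l * mu l) (sqrt (quad_form d S c)) x)))"

definition mat_mult :: "('i set) \<Rightarrow> ('i \<Rightarrow> 'i \<Rightarrow> real) \<Rightarrow> ('i \<Rightarrow> 'i \<Rightarrow> real) \<Rightarrow> 'i \<Rightarrow> 'i \<Rightarrow> real" where
  "mat_mult S A B p q = (\<Sum>r\<in>S. A p r * B r q)"

definition mat_trace :: "('i set) \<Rightarrow> ('i \<Rightarrow> 'i \<Rightarrow> real) \<Rightarrow> real" where
  "mat_trace S A = (\<Sum>p\<in>S. A p p)"

text \<open>Kronecker product T_W \<otimes> T_S, index (i,l) = block i, row l within block.\<close>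

definition kron :: "(nat \<Rightarrow> nat \<Rightarrow> real) \<Rightarrow> (nat \<Rightarrow> nat \<Rightarrow> real) \<Rightarrow> nat \<times> nat \<Rightarrow> nat \<times> nat \<Rightarrow> real" where
  "kron A B p q = A (fst p) (fst q) * B (snd p) (snd q)"

definition blockdiag :: "(nat \<Rightarrow> nat \<Rightarrow> nat \<Rightarrow> real) \<Rightarrow> nat \<times> nat \<Rightarrow> nat \<times> nat \<Rightarrow> real" where
  "blockdiag V p q = (if fst p = fst q then V (fst p) (snd p) (snd q) else 0)"

definition block_index :: "nat \<Rightarrow> nat \<Rightarrow> (nat \<times> nat) set" where
  "block_index a d = {..<a} \<times> {..<d}"

definition A1 :: "nat \<Rightarrow> nat \<Rightarrow> (nat \<Rightarrow> nat \<Rightarrow> real) \<Rightarrow> (nat \<Rightarrow> nat \<Rightarrow> real) \<Rightarrow> real" where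
  "A1 d n TS X = 1 / (2 * real (n choose 2)) *
     (\<Sum>l1<n. \<Sum>l2<l1. quad_form d TS (\<lambda>l. X l1 l - X l2 l))"

definition mat_tr_prod :: "nat \<Rightarrow> (nat \<Rightarrow> nat \<Rightarrow> real) \<Rightarrow> (nat \<Rightarrow> nat \<Rightarrow> real) \<Rightarrow> real" where
  "mat_tr_prod d A B = (\<Sum>l<d. \<Sum>m<d. A l m * B m l)"

end

theory Submission
  imports Defs
begin



definition bil :: "nat \<Rightarrow> (nat \<Rightarrow> nat \<Rightarrow> real) \<Rightarrow> (nat \<Rightarrow> real) \<Rightarrow> (nat \<Rightarrow> real) \<Rightarrow> real" where
  "bil d S x y = (\<Sum>l<d. \<Sum>m<d. x l * S l m * y m)"

lemma qf_bil: "quad_form d S x = bil d S x x"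
  by (simp add: quad_form_def bil_def)

context prob_space begin

lemma gauss_lin_moments:
  fixes c :: "nat \<Rightarrow> real"
  assumes N: "mvn_distributed M d X mu S" and P: "sym_posdef d S"
  defines "L \<equiv> (\<lambda>\<omega>. \<Sum>l<d. c l * (X l \<omega> - mu l))"
  shows "integrable M (\<lambda>\<omega>. L \<omega> ^ k)"
    and "expectation L = 0"
    and "expectation (\<lambda>\<omega>. L \<omega> ^ 2) = quad_form d S c"
    and "expectation (\<lambda>\<omega>. L \<omega> ^ 4) = 3 * (quad_form d S c)^2"
proof -
  have "integrable M (\<lambda>\<omega>. L \<omega> ^ k) \<and> expectation L = 0 \<and> expectation (\<lambda>\<omega>. L \<omega> ^ 2) = quad_form d S c
     \<and> expectation (\<lambda>\<omega>. L \<omega> ^ 4) = 3 * (quad_form d S c)^2"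
  proof (cases "\<exists>l<d. c l \<noteq> 0")
    case False
    then have L0: "L = (\<lambda>\<omega>. 0)" unfolding L_def by (auto intro!: ext sum.neutral)
    have "quad_form d S c = 0" using False unfolding quad_form_def by (auto intro!: sum.neutral)
    then show ?thesis using L0 by (cases k) auto
  next
    case True
    define m where "m = (\<Sum>l<d. c l * mu l)"
    define \<sigma> where "\<sigma> = sqrt (quad_form d S c)"
    have qpos: "quad_form d S c > 0" using P True unfolding sym_posdef_def by auto
    then have s: "\<sigma> > 0" unfolding \<sigma>_def by simp
    have D: "distributed M lborel (\<lambda>\<omega>. \<Sum>l<d. c l * X l \<omega>) (\<lambda>x. ennreal (normal_density m \<sigma> x))"
      using N True unfolding mvn_distributed_def m_def \<sigma>_def by auto
    have Leq: "L = (\<lambda>\<omega>. (\<Sum>l<d. c l * X l \<omega>) - m)"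
      unfolding L_def m_def by (auto intro!: ext simp: sum_subtractf right_diff_distrib)
    have I: "integrable M (\<lambda>\<omega>. L \<omega> ^ j)" for j
      unfolding Leq
      using distributed_integrable[OF D, of "\<lambda>x. (x - m)^j"] integrable_normal_moment[OF s, of m j]
      by simp
    have E: "expectation (\<lambda>\<omega>. L \<omega> ^ j) = integral\<^sup>L lborel (\<lambda>x. normal_density m \<sigma> x * (x - m)^j)" for j
      unfolding Leq
      using distributed_integral[OF D, of "\<lambda>x. (x - m)^j"] by simp
    have E1: "expectation L = 0"
      using E[of 1] integral_normal_moment_odd[OF s, of m 0] by simp
    have E2: "expectation (\<lambda>\<omega>. L \<omega> ^ 2) = quad_form d S c"
      using E[of 2] integral_normal_moment_even[OF s, of m 1] qpos
      by (simp add: \<sigma>_def)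
    have E4: "expectation (\<lambda>\<omega>. L \<omega> ^ 4) = 3 * (quad_form d S c)^2"
      using E[of 4] integral_normal_moment_even[OF s, of m 2] qpos
      by (simp add: \<sigma>_def fact_numeral power_divide field_simps)
    show ?thesis using I E1 E2 E4 by blast
  qed
  then show "integrable M (\<lambda>\<omega>. L \<omega> ^ k)" "expectation L = 0"
    "expectation (\<lambda>\<omega>. L \<omega> ^ 2) = quad_form d S c"
    "expectation (\<lambda>\<omega>. L \<omega> ^ 4) = 3 * (quad_form d S c)^2" by auto
qed

lemma qf_add:
  assumes sym: "\<And>l m. l < d \<Longrightarrow> m < d \<Longrightarrow> S l m = S m l"
  shows "quad_form d S (\<lambda>l. a l + b l) = quad_form d S a + quad_form d S b + 2 * bil d S a b"
    and "quad_form d S (\<lambda>l. a l - b l) = quad_form d S a + quad_form d S b - 2 * bil d S a b"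
proof -
  have sw: "bil d S b a = bil d S a b"
    unfolding bil_def by (subst sum.swap) (auto intro!: sum.cong simp: sym)
  show "quad_form d S (\<lambda>l. a l + b l) = quad_form d S a + quad_form d S b + 2 * bil d S a b"
    using sw unfolding quad_form_def bil_def
    by (simp add: algebra_simps sum.distrib)
  show "quad_form d S (\<lambda>l. a l - b l) = quad_form d S a + quad_form d S b - 2 * bil d S a b"
    using sw unfolding quad_form_def bil_def
    by (simp add: algebra_simps sum.distrib sum_subtractf)
qed

lemma gauss_bil_moments:
  fixes ca cb :: "nat \<Rightarrow> real"
  assumes N: "mvn_distributed M d X mu S" and P: "sym_posdef d S"
  defines "L \<equiv> (\<lambda>c \<omega>. \<Sum>l<d. c l * (X l \<omega> - mu l))"
  shows "integrable M (L ca)" "expectation (L ca) = 0"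
    "integrable M (\<lambda>\<omega>. L ca \<omega> * L cb \<omega>)"
    "expectation (\<lambda>\<omega>. L ca \<omega> * L cb \<omega>) = bil d S ca cb"
    "integrable M (\<lambda>\<omega>. (L ca \<omega>)^2 * (L cb \<omega>)^2)"
    "expectation (\<lambda>\<omega>. (L ca \<omega>)^2 * (L cb \<omega>)^2) = quad_form d S ca * quad_form d S cb + 2 * (bil d S ca cb)^2"
proof -
  have sym: "\<And>l m. l < d \<Longrightarrow> m < d \<Longrightarrow> S l m = S m l" using P unfolding sym_posdef_def by auto
  have G: "\<And>c k. integrable M (\<lambda>\<omega>. L c \<omega> ^ k)" "\<And>c. expectation (L c) = 0"
    "\<And>c. expectation (\<lambda>\<omega>. L c \<omega> ^ 2) = quad_form d S c"
    "\<And>c. expectation (\<lambda>\<omega>. L c \<omega> ^ 4) = 3 * (quad_form d S c)^2"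
    unfolding L_def using gauss_lin_moments[OF N P] by auto
  have Lp: "L (\<lambda>l. ca l + cb l) = (\<lambda>\<omega>. L ca \<omega> + L cb \<omega>)"
    unfolding L_def by (auto intro!: ext simp: distrib_right sum.distrib[symmetric] intro!: sum.cong)
  have Lm: "L (\<lambda>l. ca l - cb l) = (\<lambda>\<omega>. L ca \<omega> - L cb \<omega>)"
    unfolding L_def by (auto intro!: ext simp: left_diff_distrib sum_subtractf[symmetric] intro!: sum.cong)
  note Gp = G[of "\<lambda>l. ca l + cb l", unfolded Lp]
  note Gm = G[of "\<lambda>l. ca l - cb l", unfolded Lm]
  note Ga = G[of ca] and Gb = G[of cb]
  show "integrable M (L ca)" using Ga(1)[of 1] by simp
  show "expectation (L ca) = 0" by (rule Ga(2))
  have id1: "L ca \<omega> * L cb \<omega> = ((L ca \<omega> + L cb \<omega>)^2 - (L ca \<omega> - L cb \<omega>)^2) / 4" for \<omega>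
    by (simp add: power2_eq_square algebra_simps)
  show i1: "integrable M (\<lambda>\<omega>. L ca \<omega> * L cb \<omega>)"
    unfolding id1 using Gp(1)[of 2] Gm(1)[of 2] by auto
  show "expectation (\<lambda>\<omega>. L ca \<omega> * L cb \<omega>) = bil d S ca cb"
    unfolding id1 using Gp(1)[of 2] Gm(1)[of 2] Gp(3) Gm(3) qf_add[OF sym, where a=ca and b=cb]
    by simp
  have id2: "(L ca \<omega>)^2 * (L cb \<omega>)^2 = ((L ca \<omega> + L cb \<omega>)^4 + (L ca \<omega> - L cb \<omega>)^4 - 2 * (L ca \<omega>)^4 - 2 * (L cb \<omega>)^4) / 12" for \<omega>
    by (simp add: power2_eq_square power4_eq_xxxx algebra_simps)
  show "integrable M (\<lambda>\<omega>. (L ca \<omega>)^2 * (L cb \<omega>)^2)"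
    unfolding id2 using Gp(1)[of 4] Gm(1)[of 4] Ga(1)[of 4] Gb(1)[of 4] by auto
  show "expectation (\<lambda>\<omega>. (L ca \<omega>)^2 * (L cb \<omega>)^2) = quad_form d S ca * quad_form d S cb + 2 * (bil d S ca cb)^2"
    unfolding id2 using Gp(1)[of 4] Gm(1)[of 4] Ga(1)[of 4] Gb(1)[of 4] Gp(4) Gm(4) Ga(4) Gb(4) qf_add[OF sym, where a=ca and b=cb]
    by (simp add: power2_eq_square algebra_simps)
qed

end



locale setting = prob_space M for M :: "'w measure" +
  fixes a d :: nat and n :: "nat \<Rightarrow> nat" and X :: "nat \<Rightarrow> nat \<Rightarrow> nat \<Rightarrow> 'w \<Rightarrow> real"
    and mu :: "nat \<Rightarrow> nat \<Rightarrow> real" and Sigma :: "nat \<Rightarrow> nat \<Rightarrow> nat \<Rightarrow> real"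
    and TW TS :: "nat \<Rightarrow> nat \<Rightarrow> real"
  assumes a_pos: "a \<ge> 1" and d_pos: "d \<ge> 1"
    and n_ge2: "\<And>i. i < a \<Longrightarrow> n i \<ge> 2"
    and Sigma_pd: "\<And>i. i < a \<Longrightarrow> sym_posdef d (Sigma i)"
    and TW: "sym_idem a TW" and TS: "sym_idem d TS"
    and normal: "\<And>i j. i < a \<Longrightarrow> j < n i \<Longrightarrow> mvn_distributed M d (\<lambda>l. X i j l) (mu i) (Sigma i)"
    and indep: "indep_vars (\<lambda>_. PiM {..<d} (\<lambda>_. borel))
        (\<lambda>(i, j) \<omega>. \<lambda>l\<in>{..<d}. X i j l \<omega>) {(i, j). i < a \<and> j < n i}"
begin

definition "I = {(i, j). i < a \<and> j < n i}"
definition "gv \<beta> \<omega> = (\<lambda>l\<in>{..<d}. X (fst \<beta>) (snd \<beta>) l \<omega>)"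
definition "glin i c v = (\<Sum>l<d. c l * (v l - mu i l))"
definition "lin \<beta> c \<omega> = (\<Sum>l<d. c l * (X (fst \<beta>) (snd \<beta>) l \<omega> - mu (fst \<beta>) l))"

lemma lin_glin: "lin \<beta> c = (\<lambda>\<omega>. glin (fst \<beta>) c (gv \<beta> \<omega>))"
  unfolding lin_def glin_def gv_def by (auto intro!: ext sum.cong)

lemma glin_meas[measurable]: "glin i c \<in> borel_measurable (PiM {..<d} (\<lambda>_. borel))"
  unfolding glin_def by measurable

lemma indep_gv: "indep_vars (\<lambda>_. PiM {..<d} (\<lambda>_. borel)) gv I"
proof -
  have "(\<lambda>(i, j) \<omega>. \<lambda>l\<in>{..<d}. X i j l \<omega>) = gv"
    by (auto simp: gv_def fun_eq_iff split_beta)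
  then show ?thesis using indep unfolding I_def by simp
qed

lemma ind_prod:
  fixes g :: "nat \<times> nat \<Rightarrow> (nat \<Rightarrow> real) \<Rightarrow> real"
  assumes J: "finite J" "J \<subseteq> I"
    and gm: "\<And>\<beta>. \<beta> \<in> J \<Longrightarrow> g \<beta> \<in> borel_measurable (PiM {..<d} (\<lambda>_. borel))"
    and gi: "\<And>\<beta>. \<beta> \<in> J \<Longrightarrow> integrable M (\<lambda>\<omega>. g \<beta> (gv \<beta> \<omega>))"
  shows "expectation (\<lambda>\<omega>. \<Prod>\<beta>\<in>J. g \<beta> (gv \<beta> \<omega>)) = (\<Prod>\<beta>\<in>J. expectation (\<lambda>\<omega>. g \<beta> (gv \<beta> \<omega>)))"
    and "integrable M (\<lambda>\<omega>. \<Prod>\<beta>\<in>J. g \<beta> (gv \<beta> \<omega>))"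
proof -
  have iv: "indep_vars (\<lambda>_. borel) (\<lambda>\<beta> \<omega>. g \<beta> (gv \<beta> \<omega>)) J"
    by (rule indep_vars_compose2[OF indep_vars_subset[OF indep_gv J(2)]]) (use gm in auto)
  show "expectation (\<lambda>\<omega>. \<Prod>\<beta>\<in>J. g \<beta> (gv \<beta> \<omega>)) = (\<Prod>\<beta>\<in>J. expectation (\<lambda>\<omega>. g \<beta> (gv \<beta> \<omega>)))"
    by (rule indep_vars_lebesgue_integral[OF J(1) iv gi])
  show "integrable M (\<lambda>\<omega>. \<Prod>\<beta>\<in>J. g \<beta> (gv \<beta> \<omega>))"
    by (rule indep_vars_integrable[OF J(1) iv gi])
qed

lemma ind2:
  fixes g1 g2 g3 g4 :: "(nat \<Rightarrow> real) \<Rightarrow> real"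
  assumes "\<beta>1 \<in> I" "\<beta>2 \<in> I" "\<beta>1 \<noteq> \<beta>2"
    and "g1 \<in> borel_measurable (PiM {..<d} (\<lambda>_. borel))" "g2 \<in> borel_measurable (PiM {..<d} (\<lambda>_. borel))"
    and "integrable M (\<lambda>\<omega>. g1 (gv \<beta>1 \<omega>))" "integrable M (\<lambda>\<omega>. g2 (gv \<beta>2 \<omega>))"
  shows "expectation (\<lambda>\<omega>. g1 (gv \<beta>1 \<omega>) * g2 (gv \<beta>2 \<omega>)) =
      expectation (\<lambda>\<omega>. g1 (gv \<beta>1 \<omega>)) * expectation (\<lambda>\<omega>. g2 (gv \<beta>2 \<omega>))" (is ?E)
    and "integrable M (\<lambda>\<omega>. g1 (gv \<beta>1 \<omega>) * g2 (gv \<beta>2 \<omega>))" (is ?Int)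
proof -
  define g :: "nat \<times> nat \<Rightarrow> (nat \<Rightarrow> real) \<Rightarrow> real" where "g = (\<lambda>\<beta>. if \<beta> = \<beta>1 then g1 else g2)"
  have m: "\<And>\<beta>. \<beta> \<in> {\<beta>1, \<beta>2} \<Longrightarrow> g \<beta> \<in> borel_measurable (PiM {..<d} (\<lambda>_. borel))"
    using assms unfolding g_def by auto
  have i: "\<And>\<beta>. \<beta> \<in> {\<beta>1, \<beta>2} \<Longrightarrow> integrable M (\<lambda>\<omega>. g \<beta> (gv \<beta> \<omega>))"
    using assms unfolding g_def by auto
  have s: "{\<beta>1, \<beta>2} \<subseteq> I" using assms by auto
  note R = ind_prod[OF _ s m i]
  show ?E using R(1) assms unfolding g_def by (auto simp: mult.assoc)
  show ?Int using R(2) assms unfolding g_def by (auto simp: mult.assoc)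
qed

lemma ind3:
  fixes g1 g2 g3 g4 :: "(nat \<Rightarrow> real) \<Rightarrow> real"
  assumes "\<beta>1 \<in> I" "\<beta>2 \<in> I" "\<beta>3 \<in> I" "\<beta>1 \<noteq> \<beta>2" "\<beta>1 \<noteq> \<beta>3" "\<beta>2 \<noteq> \<beta>3"
    and "g1 \<in> borel_measurable (PiM {..<d} (\<lambda>_. borel))" "g2 \<in> borel_measurable (PiM {..<d} (\<lambda>_. borel))"
      "g3 \<in> borel_measurable (PiM {..<d} (\<lambda>_. borel))"
    and "integrable M (\<lambda>\<omega>. g1 (gv \<beta>1 \<omega>))" "integrable M (\<lambda>\<omega>. g2 (gv \<beta>2 \<omega>))"
      "integrable M (\<lambda>\<omega>. g3 (gv \<beta>3 \<omega>))"
  shows "expectation (\<lambda>\<omega>. g1 (gv \<beta>1 \<omega>) * g2 (gv \<beta>2 \<omega>) * g3 (gv \<beta>3 \<omega>)) =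
      expectation (\<lambda>\<omega>. g1 (gv \<beta>1 \<omega>)) * expectation (\<lambda>\<omega>. g2 (gv \<beta>2 \<omega>)) * expectation (\<lambda>\<omega>. g3 (gv \<beta>3 \<omega>))" (is ?E)
    and "integrable M (\<lambda>\<omega>. g1 (gv \<beta>1 \<omega>) * g2 (gv \<beta>2 \<omega>) * g3 (gv \<beta>3 \<omega>))" (is ?Int)
proof -
  define g :: "nat \<times> nat \<Rightarrow> (nat \<Rightarrow> real) \<Rightarrow> real" where "g = (\<lambda>\<beta>. if \<beta> = \<beta>1 then g1 else if \<beta> = \<beta>2 then g2 else g3)"
  have m: "\<And>\<beta>. \<beta> \<in> {\<beta>1, \<beta>2, \<beta>3} \<Longrightarrow> g \<beta> \<in> borel_measurable (PiM {..<d} (\<lambda>_. borel))"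
    using assms unfolding g_def by auto
  have i: "\<And>\<beta>. \<beta> \<in> {\<beta>1, \<beta>2, \<beta>3} \<Longrightarrow> integrable M (\<lambda>\<omega>. g \<beta> (gv \<beta> \<omega>))"
    using assms unfolding g_def by auto
  have s: "{\<beta>1, \<beta>2, \<beta>3} \<subseteq> I" using assms by auto
  note R = ind_prod[OF _ s m i]
  show ?E using R(1) assms unfolding g_def by (auto simp: mult.assoc)
  show ?Int using R(2) assms unfolding g_def by (auto simp: mult.assoc)
qed

lemma ind4:
  fixes g1 g2 g3 g4 :: "(nat \<Rightarrow> real) \<Rightarrow> real"
  assumes "\<beta>1 \<in> I" "\<beta>2 \<in> I" "\<beta>3 \<in> I" "\<beta>4 \<in> I" "\<beta>1 \<noteq> \<beta>2" "\<beta>1 \<noteq> \<beta>3" "\<beta>2 \<noteq> \<beta>3"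
      "\<beta>1 \<noteq> \<beta>4" "\<beta>2 \<noteq> \<beta>4" "\<beta>3 \<noteq> \<beta>4"
    and "g1 \<in> borel_measurable (PiM {..<d} (\<lambda>_. borel))" "g2 \<in> borel_measurable (PiM {..<d} (\<lambda>_. borel))"
      "g3 \<in> borel_measurable (PiM {..<d} (\<lambda>_. borel))" "g4 \<in> borel_measurable (PiM {..<d} (\<lambda>_. borel))"
    and "integrable M (\<lambda>\<omega>. g1 (gv \<beta>1 \<omega>))" "integrable M (\<lambda>\<omega>. g2 (gv \<beta>2 \<omega>))"
      "integrable M (\<lambda>\<omega>. g3 (gv \<beta>3 \<omega>))" "integrable M (\<lambda>\<omega>. g4 (gv \<beta>4 \<omega>))"
  shows "expectation (\<lambda>\<omega>. g1 (gv \<beta>1 \<omega>) * g2 (gv \<beta>2 \<omega>) * g3 (gv \<beta>3 \<omega>) * g4 (gv \<beta>4 \<omega>)) =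
      expectation (\<lambda>\<omega>. g1 (gv \<beta>1 \<omega>)) * expectation (\<lambda>\<omega>. g2 (gv \<beta>2 \<omega>)) * expectation (\<lambda>\<omega>. g3 (gv \<beta>3 \<omega>))
       * expectation (\<lambda>\<omega>. g4 (gv \<beta>4 \<omega>))" (is ?E)
    and "integrable M (\<lambda>\<omega>. g1 (gv \<beta>1 \<omega>) * g2 (gv \<beta>2 \<omega>) * g3 (gv \<beta>3 \<omega>) * g4 (gv \<beta>4 \<omega>))" (is ?Int)
proof -
  define g :: "nat \<times> nat \<Rightarrow> (nat \<Rightarrow> real) \<Rightarrow> real" where "g = (\<lambda>\<beta>. if \<beta> = \<beta>1 then g1 else if \<beta> = \<beta>2 then g2 else if \<beta> = \<beta>3 then g3 else g4)"
  have m: "\<And>\<beta>. \<beta> \<in> {\<beta>1, \<beta>2, \<beta>3, \<beta>4} \<Longrightarrow> g \<beta> \<in> borel_measurable (PiM {..<d} (\<lambda>_. borel))"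
    using assms unfolding g_def by auto
  have i: "\<And>\<beta>. \<beta> \<in> {\<beta>1, \<beta>2, \<beta>3, \<beta>4} \<Longrightarrow> integrable M (\<lambda>\<omega>. g \<beta> (gv \<beta> \<omega>))"
    using assms unfolding g_def by auto
  have s: "{\<beta>1, \<beta>2, \<beta>3, \<beta>4} \<subseteq> I" using assms by auto
  note R = ind_prod[OF _ s m i]
  show ?E using R(1) assms unfolding g_def by (auto simp: mult.assoc)
  show ?Int using R(2) assms unfolding g_def by (auto simp: mult.assoc)
qed

end



context setting begin

lemma I_mem: "\<beta> \<in> I \<longleftrightarrow> fst \<beta> < a \<and> snd \<beta> < n (fst \<beta>)"
  unfolding I_def by (cases \<beta>) auto

lemma lin_mom:
  assumes "\<beta> \<in> I"
  shows "integrable M (lin \<beta> c)" "expectation (lin \<beta> c) = 0"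
    "integrable M (\<lambda>\<omega>. lin \<beta> c \<omega> * lin \<beta> e \<omega>)"
    "expectation (\<lambda>\<omega>. lin \<beta> c \<omega> * lin \<beta> e \<omega>) = bil d (Sigma (fst \<beta>)) c e"
    "integrable M (\<lambda>\<omega>. (lin \<beta> c \<omega>)^2 * (lin \<beta> e \<omega>)^2)"
    "expectation (\<lambda>\<omega>. (lin \<beta> c \<omega>)^2 * (lin \<beta> e \<omega>)^2) =
       quad_form d (Sigma (fst \<beta>)) c * quad_form d (Sigma (fst \<beta>)) e + 2 * (bil d (Sigma (fst \<beta>)) c e)^2"
proof -
  have i: "fst \<beta> < a" "snd \<beta> < n (fst \<beta>)" using assms I_mem by auto
  note G = gauss_bil_moments[OF normal[OF i] Sigma_pd[OF i(1)]]
  show "integrable M (lin \<beta> c)" "expectation (lin \<beta> c) = 0"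
    "integrable M (\<lambda>\<omega>. lin \<beta> c \<omega> * lin \<beta> e \<omega>)"
    "expectation (\<lambda>\<omega>. lin \<beta> c \<omega> * lin \<beta> e \<omega>) = bil d (Sigma (fst \<beta>)) c e"
    "integrable M (\<lambda>\<omega>. (lin \<beta> c \<omega>)^2 * (lin \<beta> e \<omega>)^2)"
    "expectation (\<lambda>\<omega>. (lin \<beta> c \<omega>)^2 * (lin \<beta> e \<omega>)^2) =
       quad_form d (Sigma (fst \<beta>)) c * quad_form d (Sigma (fst \<beta>)) e + 2 * (bil d (Sigma (fst \<beta>)) c e)^2"
    using G(1)[where ca=c] G(2)[where ca=c] G(3-6)[where ca=c and cb=e] unfolding lin_def by auto
qed

lemma glin_mom:
  assumes "\<beta> \<in> I"
  shows "integrable M (\<lambda>\<omega>. glin (fst \<beta>) c (gv \<beta> \<omega>))" "expectation (\<lambda>\<omega>. glin (fst \<beta>) c (gv \<beta> \<omega>)) = 0"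
    "integrable M (\<lambda>\<omega>. glin (fst \<beta>) c (gv \<beta> \<omega>) * glin (fst \<beta>) e (gv \<beta> \<omega>))"
    "expectation (\<lambda>\<omega>. glin (fst \<beta>) c (gv \<beta> \<omega>) * glin (fst \<beta>) e (gv \<beta> \<omega>)) = bil d (Sigma (fst \<beta>)) c e"
  using lin_mom(1,2)[OF assms, of c] lin_mom(3,4)[OF assms, of c e] unfolding lin_glin by auto

lemma p4:
  assumes I: "\<beta>1 \<in> I" "\<beta>2 \<in> I" "\<beta>3 \<in> I" "\<beta>4 \<in> I" and ne: "\<beta>1 \<noteq> \<beta>2" "\<beta>3 \<noteq> \<beta>4"
  shows "integrable M (\<lambda>\<omega>. lin \<beta>1 c1 \<omega> * lin \<beta>2 c2 \<omega> * lin \<beta>3 c3 \<omega> * lin \<beta>4 c4 \<omega>) \<and>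
     expectation (\<lambda>\<omega>. lin \<beta>1 c1 \<omega> * lin \<beta>2 c2 \<omega> * lin \<beta>3 c3 \<omega> * lin \<beta>4 c4 \<omega>) =
     (if \<beta>1 = \<beta>3 \<and> \<beta>2 = \<beta>4 then bil d (Sigma (fst \<beta>1)) c1 c3 * bil d (Sigma (fst \<beta>2)) c2 c4
      else if \<beta>1 = \<beta>4 \<and> \<beta>2 = \<beta>3 then bil d (Sigma (fst \<beta>1)) c1 c4 * bil d (Sigma (fst \<beta>2)) c2 c3
      else 0)"
proof -
  note m1 = glin_meas
  have m2: "(\<lambda>v. glin i c v * glin i e v) \<in> borel_measurable (PiM {..<d} (\<lambda>_. borel))" for i c e
    by measurable
  note gm = glin_mom
  show ?thesis
  proof (cases "\<beta>1 = \<beta>3 \<and> \<beta>2 = \<beta>4")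
    case True
    note R = ind2[OF I(1,2) ne(1) m2[of "fst \<beta>1" c1 c3] m2[of "fst \<beta>2" c2 c4]]
    have R1: "expectation (\<lambda>\<omega>. glin (fst \<beta>1) c1 (gv \<beta>1 \<omega>) * glin (fst \<beta>1) c3 (gv \<beta>1 \<omega>) *
        (glin (fst \<beta>2) c2 (gv \<beta>2 \<omega>) * glin (fst \<beta>2) c4 (gv \<beta>2 \<omega>))) = 
        bil d (Sigma (fst \<beta>1)) c1 c3 * bil d (Sigma (fst \<beta>2)) c2 c4"
      "integrable M (\<lambda>\<omega>. glin (fst \<beta>1) c1 (gv \<beta>1 \<omega>) * glin (fst \<beta>1) c3 (gv \<beta>1 \<omega>) *
        (glin (fst \<beta>2) c2 (gv \<beta>2 \<omega>) * glin (fst \<beta>2) c4 (gv \<beta>2 \<omega>)))"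
      using R(1) gm(3,4)[OF I(1), of c1 c3] gm(3,4)[OF I(2), of c2 c4] apply simp
      using R(2) gm(3)[OF I(1), of c1 c3] gm(3)[OF I(2), of c2 c4] by simp
    have e: "(\<lambda>\<omega>. lin \<beta>1 c1 \<omega> * lin \<beta>2 c2 \<omega> * lin \<beta>3 c3 \<omega> * lin \<beta>4 c4 \<omega>) =
        (\<lambda>\<omega>. glin (fst \<beta>1) c1 (gv \<beta>1 \<omega>) * glin (fst \<beta>1) c3 (gv \<beta>1 \<omega>) *
        (glin (fst \<beta>2) c2 (gv \<beta>2 \<omega>) * glin (fst \<beta>2) c4 (gv \<beta>2 \<omega>)))"
      using True by (simp add: lin_glin mult_ac)
    show ?thesis unfolding e if_P[OF True] using R1 by simp
  next
    case nT: False
    show ?thesis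
    proof (cases "\<beta>1 = \<beta>4 \<and> \<beta>2 = \<beta>3")
      case True
      note R = ind2[OF I(1,2) ne(1) m2[of "fst \<beta>1" c1 c4] m2[of "fst \<beta>2" c2 c3]]
      have R1: "expectation (\<lambda>\<omega>. glin (fst \<beta>1) c1 (gv \<beta>1 \<omega>) * glin (fst \<beta>1) c4 (gv \<beta>1 \<omega>) *
          (glin (fst \<beta>2) c2 (gv \<beta>2 \<omega>) * glin (fst \<beta>2) c3 (gv \<beta>2 \<omega>))) = 
          bil d (Sigma (fst \<beta>1)) c1 c4 * bil d (Sigma (fst \<beta>2)) c2 c3"
        "integrable M (\<lambda>\<omega>. glin (fst \<beta>1) c1 (gv \<beta>1 \<omega>) * glin (fst \<beta>1) c4 (gv \<beta>1 \<omega>) *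
          (glin (fst \<beta>2) c2 (gv \<beta>2 \<omega>) * glin (fst \<beta>2) c3 (gv \<beta>2 \<omega>)))"
        using R(1) gm(3,4)[OF I(1), of c1 c4] gm(3,4)[OF I(2), of c2 c3] apply simp
        using R(2) gm(3)[OF I(1), of c1 c4] gm(3)[OF I(2), of c2 c3] by simp
      have e: "(\<lambda>\<omega>. lin \<beta>1 c1 \<omega> * lin \<beta>2 c2 \<omega> * lin \<beta>3 c3 \<omega> * lin \<beta>4 c4 \<omega>) =
          (\<lambda>\<omega>. glin (fst \<beta>1) c1 (gv \<beta>1 \<omega>) * glin (fst \<beta>1) c4 (gv \<beta>1 \<omega>) *
          (glin (fst \<beta>2) c2 (gv \<beta>2 \<omega>) * glin (fst \<beta>2) c3 (gv \<beta>2 \<omega>)))"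
        using True by (simp add: lin_glin mult_ac)
      show ?thesis unfolding e if_not_P[OF nT] if_P[OF True] using R1 by simp
    next
      case nT2: False
      have "integrable M (\<lambda>\<omega>. lin \<beta>1 c1 \<omega> * lin \<beta>2 c2 \<omega> * lin \<beta>3 c3 \<omega> * lin \<beta>4 c4 \<omega>) \<and>
            expectation (\<lambda>\<omega>. lin \<beta>1 c1 \<omega> * lin \<beta>2 c2 \<omega> * lin \<beta>3 c3 \<omega> * lin \<beta>4 c4 \<omega>) = 0"
      proof (cases "\<beta>1 = \<beta>3")
      case True
      with nT ne have d: "\<beta>2 \<noteq> \<beta>4" "\<beta>1 \<noteq> \<beta>4" by auto
      note R = ind3[OF I(1,2,4) ne(1) d(2,1) m2[of "fst \<beta>1" c1 c3] m1[of "fst \<beta>2" c2] m1[of "fst \<beta>4" c4]]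
      note ii = gm(3)[OF I(1), of c1 c3] gm(1)[OF I(2), of c2] gm(1)[OF I(4), of c4]
      have R1: "expectation (\<lambda>\<omega>. (glin (fst \<beta>1) c1 (gv \<beta>1 \<omega>) * glin (fst \<beta>1) c3 (gv \<beta>1 \<omega>)) * glin (fst \<beta>2) c2 (gv \<beta>2 \<omega>) * glin (fst \<beta>4) c4 (gv \<beta>4 \<omega>)) = 0" "integrable M (\<lambda>\<omega>. (glin (fst \<beta>1) c1 (gv \<beta>1 \<omega>) * glin (fst \<beta>1) c3 (gv \<beta>1 \<omega>)) * glin (fst \<beta>2) c2 (gv \<beta>2 \<omega>) * glin (fst \<beta>4) c4 (gv \<beta>4 \<omega>))"
        using R(1)[OF ii] gm(4)[OF I(1), of c1 c3] gm(2)[OF I(2), of c2] gm(2)[OF I(4), of c4] apply simp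
        using R(2)[OF ii] by simp
      have e: "(\<lambda>\<omega>. lin \<beta>1 c1 \<omega> * lin \<beta>2 c2 \<omega> * lin \<beta>3 c3 \<omega> * lin \<beta>4 c4 \<omega>) = (\<lambda>\<omega>. (glin (fst \<beta>1) c1 (gv \<beta>1 \<omega>) * glin (fst \<beta>1) c3 (gv \<beta>1 \<omega>)) * glin (fst \<beta>2) c2 (gv \<beta>2 \<omega>) * glin (fst \<beta>4) c4 (gv \<beta>4 \<omega>))"
        using True by (simp add: lin_glin mult_ac)
      show ?thesis unfolding e using R1 by simp
      next
        case n13: False
        show ?thesis
        proof (cases "\<beta>1 = \<beta>4")
      case True
      with nT2 ne have d: "\<beta>2 \<noteq> \<beta>3" "\<beta>1 \<noteq> \<beta>3" by auto
      note R = ind3[OF I(1,2,3) ne(1) d(2,1) m2[of "fst \<beta>1" c1 c4] m1[of "fst \<beta>2" c2] m1[of "fst \<beta>3" c3]]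
      note ii = gm(3)[OF I(1), of c1 c4] gm(1)[OF I(2), of c2] gm(1)[OF I(3), of c3]
      have R1: "expectation (\<lambda>\<omega>. (glin (fst \<beta>1) c1 (gv \<beta>1 \<omega>) * glin (fst \<beta>1) c4 (gv \<beta>1 \<omega>)) * glin (fst \<beta>2) c2 (gv \<beta>2 \<omega>) * glin (fst \<beta>3) c3 (gv \<beta>3 \<omega>)) = 0" "integrable M (\<lambda>\<omega>. (glin (fst \<beta>1) c1 (gv \<beta>1 \<omega>) * glin (fst \<beta>1) c4 (gv \<beta>1 \<omega>)) * glin (fst \<beta>2) c2 (gv \<beta>2 \<omega>) * glin (fst \<beta>3) c3 (gv \<beta>3 \<omega>))"
        using R(1)[OF ii] gm(4)[OF I(1), of c1 c4] gm(2)[OF I(2), of c2] gm(2)[OF I(3), of c3] apply simp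
        using R(2)[OF ii] by simp
      have e: "(\<lambda>\<omega>. lin \<beta>1 c1 \<omega> * lin \<beta>2 c2 \<omega> * lin \<beta>3 c3 \<omega> * lin \<beta>4 c4 \<omega>) = (\<lambda>\<omega>. (glin (fst \<beta>1) c1 (gv \<beta>1 \<omega>) * glin (fst \<beta>1) c4 (gv \<beta>1 \<omega>)) * glin (fst \<beta>2) c2 (gv \<beta>2 \<omega>) * glin (fst \<beta>3) c3 (gv \<beta>3 \<omega>))"
        using True by (simp add: lin_glin mult_ac)
      show ?thesis unfolding e using R1 by simp
        next
          case n14: False
          show ?thesis
          proof (cases "\<beta>2 = \<beta>3")
      case True
      with ne n14 have d: "\<beta>1 \<noteq> \<beta>4" "\<beta>2 \<noteq> \<beta>4" by auto
      note R = ind3[OF I(1,2,4) ne(1) d m1[of "fst \<beta>1" c1] m2[of "fst \<beta>2" c2 c3] m1[of "fst \<beta>4" c4]]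
      note ii = gm(1)[OF I(1), of c1] gm(3)[OF I(2), of c2 c3] gm(1)[OF I(4), of c4]
      have R1: "expectation (\<lambda>\<omega>. glin (fst \<beta>1) c1 (gv \<beta>1 \<omega>) * (glin (fst \<beta>2) c2 (gv \<beta>2 \<omega>) * glin (fst \<beta>2) c3 (gv \<beta>2 \<omega>)) * glin (fst \<beta>4) c4 (gv \<beta>4 \<omega>)) = 0" "integrable M (\<lambda>\<omega>. glin (fst \<beta>1) c1 (gv \<beta>1 \<omega>) * (glin (fst \<beta>2) c2 (gv \<beta>2 \<omega>) * glin (fst \<beta>2) c3 (gv \<beta>2 \<omega>)) * glin (fst \<beta>4) c4 (gv \<beta>4 \<omega>))"
        using R(1)[OF ii] gm(2)[OF I(1), of c1] gm(4)[OF I(2), of c2 c3] gm(2)[OF I(4), of c4] apply simp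
        using R(2)[OF ii] by simp
      have e: "(\<lambda>\<omega>. lin \<beta>1 c1 \<omega> * lin \<beta>2 c2 \<omega> * lin \<beta>3 c3 \<omega> * lin \<beta>4 c4 \<omega>) = (\<lambda>\<omega>. glin (fst \<beta>1) c1 (gv \<beta>1 \<omega>) * (glin (fst \<beta>2) c2 (gv \<beta>2 \<omega>) * glin (fst \<beta>2) c3 (gv \<beta>2 \<omega>)) * glin (fst \<beta>4) c4 (gv \<beta>4 \<omega>))"
        using True by (simp add: lin_glin mult_ac)
      show ?thesis unfolding e using R1 by simp
          next
            case n23: False
            show ?thesis
            proof (cases "\<beta>2 = \<beta>4")
      case True
      with ne n13 have d: "\<beta>1 \<noteq> \<beta>3" "\<beta>2 \<noteq> \<beta>3" by auto
      note R = ind3[OF I(1,2,3) ne(1) d m1[of "fst \<beta>1" c1] m2[of "fst \<beta>2" c2 c4] m1[of "fst \<beta>3" c3]]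
      note ii = gm(1)[OF I(1), of c1] gm(3)[OF I(2), of c2 c4] gm(1)[OF I(3), of c3]
      have R1: "expectation (\<lambda>\<omega>. glin (fst \<beta>1) c1 (gv \<beta>1 \<omega>) * (glin (fst \<beta>2) c2 (gv \<beta>2 \<omega>) * glin (fst \<beta>2) c4 (gv \<beta>2 \<omega>)) * glin (fst \<beta>3) c3 (gv \<beta>3 \<omega>)) = 0" "integrable M (\<lambda>\<omega>. glin (fst \<beta>1) c1 (gv \<beta>1 \<omega>) * (glin (fst \<beta>2) c2 (gv \<beta>2 \<omega>) * glin (fst \<beta>2) c4 (gv \<beta>2 \<omega>)) * glin (fst \<beta>3) c3 (gv \<beta>3 \<omega>))"
        using R(1)[OF ii] gm(2)[OF I(1), of c1] gm(4)[OF I(2), of c2 c4] gm(2)[OF I(3), of c3] apply simp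
        using R(2)[OF ii] by simp
      have e: "(\<lambda>\<omega>. lin \<beta>1 c1 \<omega> * lin \<beta>2 c2 \<omega> * lin \<beta>3 c3 \<omega> * lin \<beta>4 c4 \<omega>) = (\<lambda>\<omega>. glin (fst \<beta>1) c1 (gv \<beta>1 \<omega>) * (glin (fst \<beta>2) c2 (gv \<beta>2 \<omega>) * glin (fst \<beta>2) c4 (gv \<beta>2 \<omega>)) * glin (fst \<beta>3) c3 (gv \<beta>3 \<omega>))"
        using True by (simp add: lin_glin mult_ac)
      show ?thesis unfolding e using R1 by simp
            next
              case n24: False
              note R = ind4[OF I ne(1) n13 n23 n14 n24 ne(2) m1[of "fst \<beta>1" c1] m1[of "fst \<beta>2" c2] m1[of "fst \<beta>3" c3] m1[of "fst \<beta>4" c4]]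
              show ?thesis unfolding lin_glin using R gm(1,2)[OF I(1), of c1] gm(1,2)[OF I(2), of c2] gm(1,2)[OF I(3), of c3] gm(1,2)[OF I(4), of c4] by simp
            qed
          qed
        qed
      qed
      then show ?thesis unfolding if_not_P[OF nT] if_not_P[OF nT2] .
    qed
  qed
qed

end



lemma bil_cols:
  assumes T: "sym_idem d T"
  shows "bil d T y z = (\<Sum>k<d. (\<Sum>l<d. T l k * y l) * (\<Sum>l<d. T l k * z l))"
proof -
  have sy: "\<And>p q. p < d \<Longrightarrow> q < d \<Longrightarrow> T p q = T q p" and id: "\<And>p q. p < d \<Longrightarrow> q < d \<Longrightarrow> (\<Sum>r<d. T p r * T r q) = T p q"
    using T unfolding sym_idem_def by auto
  have "(\<Sum>k<d. (\<Sum>l<d. T l k * y l) * (\<Sum>l<d. T l k * z l)) = (\<Sum>k<d. \<Sum>l<d. \<Sum>m<d. y l * (T l k * T k m) * z m)"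
  proof -
    have pt: "T l k * y l * (T m k * z m) = y l * (T l k * T k m) * z m" if "k < d" "m < d" for k l m
      using sy[OF that(2,1)] by simp
    show ?thesis unfolding sum_product by (intro sum.cong refl) (simp add: pt)
  qed
  also have "\<dots> = (\<Sum>l<d. \<Sum>m<d. \<Sum>k<d. y l * (T l k * T k m) * z m)"
    by (subst sum.swap) (rule sum.cong[OF refl], rule sum.swap)
  also have "\<dots> = (\<Sum>l<d. \<Sum>m<d. y l * (\<Sum>k<d. T l k * T k m) * z m)"
    by (simp add: sum_distrib_left sum_distrib_right)
  also have "\<dots> = bil d T y z"
    unfolding bil_def by (auto intro!: sum.cong simp: id)
  finally show ?thesis ..
qed

context setting begin

definition "col k = (\<lambda>l. TS l k)"
definition "Yv \<beta> \<omega> = (\<lambda>l. X (fst \<beta>) (snd \<beta>) l \<omega> - mu (fst \<beta>) l)"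
definition "Qf \<beta> \<omega> = quad_form d TS (Yv \<beta> \<omega>)"
definition "Bf \<beta> \<gamma> \<omega> = bil d TS (Yv \<beta> \<omega>) (Yv \<gamma> \<omega>)"
definition "Wm i j = (\<Sum>k<d. \<Sum>k'<d. bil d (Sigma i) (col k) (col k') * bil d (Sigma j) (col k) (col k'))"

lemma Bf_cols: "Bf \<beta> \<gamma> \<omega> = (\<Sum>k<d. lin \<beta> (col k) \<omega> * lin \<gamma> (col k) \<omega>)"
  unfolding Bf_def bil_cols[OF TS] lin_def col_def Yv_def ..

lemma Qf_cols: "Qf \<beta> \<omega> = (\<Sum>k<d. (lin \<beta> (col k) \<omega>)^2)"
  unfolding Qf_def qf_bil bil_cols[OF TS] lin_def col_def Yv_def power2_eq_square ..

definition "tau i = (\<Sum>k<d. \<Sum>k'<d. (bil d (Sigma i) (col k) (col k'))^2)"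

lemma tr_cols:
  assumes "i < a"
  shows "(\<Sum>k<d. bil d (Sigma i) (col k) (col k)) = mat_tr_prod d TS (Sigma i)"
proof -
  have sy: "\<And>p q. p < d \<Longrightarrow> q < d \<Longrightarrow> TS p q = TS q p" and id: "\<And>p q. p < d \<Longrightarrow> q < d \<Longrightarrow> (\<Sum>r<d. TS p r * TS r q) = TS p q"
    using TS unfolding sym_idem_def by auto
  have ss: "\<And>p q. p < d \<Longrightarrow> q < d \<Longrightarrow> Sigma i p q = Sigma i q p" using Sigma_pd[OF assms] unfolding sym_posdef_def by auto
  have "(\<Sum>k<d. bil d (Sigma i) (col k) (col k)) = (\<Sum>k<d. \<Sum>l<d. \<Sum>m<d. Sigma i l m * (TS l k * TS k m))"
    unfolding bil_def col_def
  proof (intro sum.cong refl)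
    fix k l m assume "k \<in> {..<d}" "m \<in> {..<d}"
    then show "TS l k * Sigma i l m * TS m k = Sigma i l m * (TS l k * TS k m)" using sy[of m k] by simp
  qed
  also have "\<dots> = (\<Sum>l<d. \<Sum>m<d. \<Sum>k<d. Sigma i l m * (TS l k * TS k m))"
    by (subst sum.swap) (rule sum.cong[OF refl], rule sum.swap)
  also have "\<dots> = (\<Sum>l<d. \<Sum>m<d. Sigma i l m * TS l m)"
    by (intro sum.cong refl) (simp add: sum_distrib_left[symmetric] id)
  also have "\<dots> = mat_tr_prod d TS (Sigma i)"
    unfolding mat_tr_prod_def by (intro sum.cong refl) (simp add: ss)
  finally show ?thesis .
qed

lemma Q_mom:
  assumes b: "\<beta> \<in> I"
  defines "t \<equiv> mat_tr_prod d TS (Sigma (fst \<beta>))"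
  shows "integrable M (Qf \<beta>)" "expectation (Qf \<beta>) = t"
    "integrable M (\<lambda>\<omega>. (Qf \<beta> \<omega> - t)^2)" "expectation (\<lambda>\<omega>. (Qf \<beta> \<omega> - t)^2) = 2 * tau (fst \<beta>)"
proof -
  have i: "fst \<beta> < a" using b I_mem by auto
  let ?S = "Sigma (fst \<beta>)"
  let ?L = "\<lambda>k. lin \<beta> (col k)"
  have sq: "\<And>k. (\<lambda>\<omega>. (?L k \<omega>)^2) = (\<lambda>\<omega>. ?L k \<omega> * ?L k \<omega>)" by (simp add: power2_eq_square)
  have i1: "\<And>k. integrable M (\<lambda>\<omega>. (?L k \<omega>)^2)" unfolding sq using lin_mom(3)[OF b] by blast
  have e1: "\<And>k. expectation (\<lambda>\<omega>. (?L k \<omega>)^2) = bil d ?S (col k) (col k)" unfolding sq using lin_mom(4)[OF b] by blast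
  have Qe: "Qf \<beta> = (\<lambda>\<omega>. \<Sum>k<d. (?L k \<omega>)^2)" by (rule ext) (rule Qf_cols)
  show iQ: "integrable M (Qf \<beta>)" unfolding Qe using i1 by auto
  have tt: "t = (\<Sum>k<d. bil d ?S (col k) (col k))" unfolding t_def using tr_cols[OF i] by simp
  show eQ: "expectation (Qf \<beta>) = t" unfolding Qe tt using i1 e1 by (simp add: Bochner_Integration.integral_sum)
  have Q2: "(\<lambda>\<omega>. (Qf \<beta> \<omega>)^2) = (\<lambda>\<omega>. \<Sum>k<d. \<Sum>k'<d. (?L k \<omega>)^2 * (?L k' \<omega>)^2)"
    unfolding Qe by (simp add: power2_eq_square[of "sum _ _"] sum_product)
  have i2: "\<And>k k'. integrable M (\<lambda>\<omega>. (?L k \<omega>)^2 * (?L k' \<omega>)^2)" using lin_mom(5)[OF b] by blast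
  have e2: "\<And>k k'. expectation (\<lambda>\<omega>. (?L k \<omega>)^2 * (?L k' \<omega>)^2) =
      bil d ?S (col k) (col k) * bil d ?S (col k') (col k') + 2 * (bil d ?S (col k) (col k'))^2"
    using lin_mom(6)[OF b] by (simp add: qf_bil)
  have iQ2: "integrable M (\<lambda>\<omega>. (Qf \<beta> \<omega>)^2)" unfolding Q2 using i2 by auto
  have eQ2: "expectation (\<lambda>\<omega>. (Qf \<beta> \<omega>)^2) = t^2 + 2 * tau (fst \<beta>)"
  proof -
    have "expectation (\<lambda>\<omega>. (Qf \<beta> \<omega>)^2) = (\<Sum>k<d. \<Sum>k'<d.
      bil d ?S (col k) (col k) * bil d ?S (col k') (col k') + 2 * (bil d ?S (col k) (col k'))^2)"
      unfolding Q2 using i2 e2 by (simp add: Bochner_Integration.integral_sum)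
    also have "\<dots> = t^2 + 2 * tau (fst \<beta>)"
    proof -
      have "(\<Sum>k<d. \<Sum>k'<d. bil d ?S (col k) (col k) * bil d ?S (col k') (col k')) = (\<Sum>k<d. bil d ?S (col k) (col k))^2"
        by (simp add: power2_eq_square sum_product)
      then show ?thesis unfolding tt tau_def by (simp add: sum.distrib sum_distrib_left)
    qed
    finally show ?thesis .
  qed
  have ex: "(\<lambda>\<omega>. (Qf \<beta> \<omega> - t)^2) = (\<lambda>\<omega>. (Qf \<beta> \<omega>)^2 - 2 * t * Qf \<beta> \<omega> + t^2)"
    by (simp add: power2_diff algebra_simps)
  show "integrable M (\<lambda>\<omega>. (Qf \<beta> \<omega> - t)^2)" unfolding ex using iQ2 iQ by auto
  show "expectation (\<lambda>\<omega>. (Qf \<beta> \<omega> - t)^2) = 2 * tau (fst \<beta>)"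
    unfolding ex using iQ2 iQ eQ2 eQ by (simp add: power2_eq_square prob_space)
qed

lemma B_mom:
  assumes I: "\<beta> \<in> I" "\<gamma> \<in> I" "\<beta>' \<in> I" "\<gamma>' \<in> I" and ne: "\<beta> \<noteq> \<gamma>" "\<beta>' \<noteq> \<gamma>'"
  shows "integrable M (\<lambda>\<omega>. Bf \<beta> \<gamma> \<omega> * Bf \<beta>' \<gamma>' \<omega>)"
    "expectation (\<lambda>\<omega>. Bf \<beta> \<gamma> \<omega> * Bf \<beta>' \<gamma>' \<omega>) =
      (if (\<beta> = \<beta>' \<and> \<gamma> = \<gamma>') \<or> (\<beta> = \<gamma>' \<and> \<gamma> = \<beta>') then Wm (fst \<beta>) (fst \<gamma>) else 0)"
proof -
  have pe: "(\<lambda>\<omega>. Bf \<beta> \<gamma> \<omega> * Bf \<beta>' \<gamma>' \<omega>) = (\<lambda>\<omega>. \<Sum>k<d. \<Sum>k'<d.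
      lin \<beta> (col k) \<omega> * lin \<gamma> (col k) \<omega> * lin \<beta>' (col k') \<omega> * lin \<gamma>' (col k') \<omega>)"
    unfolding Bf_cols by (simp add: sum_product mult.assoc)
  note P = p4[OF I ne]
  show "integrable M (\<lambda>\<omega>. Bf \<beta> \<gamma> \<omega> * Bf \<beta>' \<gamma>' \<omega>)" unfolding pe using P by auto
  have E: "expectation (\<lambda>\<omega>. Bf \<beta> \<gamma> \<omega> * Bf \<beta>' \<gamma>' \<omega>) = (\<Sum>k<d. \<Sum>k'<d.
      expectation (\<lambda>\<omega>. lin \<beta> (col k) \<omega> * lin \<gamma> (col k) \<omega> * lin \<beta>' (col k') \<omega> * lin \<gamma>' (col k') \<omega>))"
    unfolding pe using P by (simp add: Bochner_Integration.integral_sum)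
  show "expectation (\<lambda>\<omega>. Bf \<beta> \<gamma> \<omega> * Bf \<beta>' \<gamma>' \<omega>) =
      (if (\<beta> = \<beta>' \<and> \<gamma> = \<gamma>') \<or> (\<beta> = \<gamma>' \<and> \<gamma> = \<beta>') then Wm (fst \<beta>) (fst \<gamma>) else 0)"
  proof (cases "\<beta> = \<beta>' \<and> \<gamma> = \<gamma>'")
    case True
    have "\<And>k k'. expectation (\<lambda>\<omega>. lin \<beta> (col k) \<omega> * lin \<gamma> (col k) \<omega> * lin \<beta>' (col k') \<omega> * lin \<gamma>' (col k') \<omega>)
       = bil d (Sigma (fst \<beta>)) (col k) (col k') * bil d (Sigma (fst \<gamma>)) (col k) (col k')"
      using P unfolding if_P[OF True] by blast
    then show ?thesis unfolding E Wm_def using True by simp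
  next
    case nT: False
    show ?thesis
    proof (cases "\<beta> = \<gamma>' \<and> \<gamma> = \<beta>'")
      case True
      have "\<And>k k'. expectation (\<lambda>\<omega>. lin \<beta> (col k) \<omega> * lin \<gamma> (col k) \<omega> * lin \<beta>' (col k') \<omega> * lin \<gamma>' (col k') \<omega>)
         = bil d (Sigma (fst \<beta>)) (col k) (col k') * bil d (Sigma (fst \<gamma>)) (col k) (col k')"
        using P unfolding if_not_P[OF nT] if_P[OF True] by blast
      then show ?thesis unfolding E Wm_def using True by simp
    next
      case nT2: False
      have "\<And>k k'. expectation (\<lambda>\<omega>. lin \<beta> (col k) \<omega> * lin \<gamma> (col k) \<omega> * lin \<beta>' (col k') \<omega> * lin \<gamma>' (col k') \<omega>) = 0"
        using P unfolding if_not_P[OF nT] if_not_P[OF nT2] by blast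
      moreover have nn: "\<not> ((\<beta> = \<beta>' \<and> \<gamma> = \<gamma>') \<or> (\<beta> = \<gamma>' \<and> \<gamma> = \<beta>'))" using nT nT2 by blast
      ultimately show ?thesis unfolding E if_not_P[OF nn] by simp
    qed
  qed
qed

end



lemma (in prob_space) orth_sum:
  fixes f :: "'i \<Rightarrow> 'a \<Rightarrow> real"
  assumes K: "finite K"
    and i: "\<And>\<alpha> \<beta>. \<alpha> \<in> K \<Longrightarrow> \<beta> \<in> K \<Longrightarrow> integrable M (\<lambda>\<omega>. f \<alpha> \<omega> * f \<beta> \<omega>)"
    and z: "\<And>\<alpha> \<beta>. \<alpha> \<in> K \<Longrightarrow> \<beta> \<in> K \<Longrightarrow> \<alpha> \<noteq> \<beta> \<Longrightarrow> expectation (\<lambda>\<omega>. f \<alpha> \<omega> * f \<beta> \<omega>) = 0"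
  shows "integrable M (\<lambda>\<omega>. (\<Sum>\<alpha>\<in>K. f \<alpha> \<omega>)^2)"
    "expectation (\<lambda>\<omega>. (\<Sum>\<alpha>\<in>K. f \<alpha> \<omega>)^2) = (\<Sum>\<alpha>\<in>K. expectation (\<lambda>\<omega>. (f \<alpha> \<omega>)^2))"
proof -
  have e: "(\<lambda>\<omega>. (\<Sum>\<alpha>\<in>K. f \<alpha> \<omega>)^2) = (\<lambda>\<omega>. \<Sum>\<alpha>\<in>K. \<Sum>\<beta>\<in>K. f \<alpha> \<omega> * f \<beta> \<omega>)"
    by (simp add: power2_eq_square sum_product)
  show "integrable M (\<lambda>\<omega>. (\<Sum>\<alpha>\<in>K. f \<alpha> \<omega>)^2)" unfolding e using i by auto
  have "expectation (\<lambda>\<omega>. (\<Sum>\<alpha>\<in>K. f \<alpha> \<omega>)^2) = (\<Sum>\<alpha>\<in>K. \<Sum>\<beta>\<in>K. expectation (\<lambda>\<omega>. f \<alpha> \<omega> * f \<beta> \<omega>))"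
    unfolding e using i by (simp add: Bochner_Integration.integral_sum)
  also have "\<dots> = (\<Sum>\<alpha>\<in>K. \<Sum>\<beta>\<in>K. if \<beta> = \<alpha> then expectation (\<lambda>\<omega>. (f \<alpha> \<omega>)^2) else 0)"
    by (intro sum.cong refl) (auto simp: z power2_eq_square)
  also have "\<dots> = (\<Sum>\<alpha>\<in>K. expectation (\<lambda>\<omega>. (f \<alpha> \<omega>)^2))"
    using K by (simp add: sum.delta)
  finally show "expectation (\<lambda>\<omega>. (\<Sum>\<alpha>\<in>K. f \<alpha> \<omega>)^2) = (\<Sum>\<alpha>\<in>K. expectation (\<lambda>\<omega>. (f \<alpha> \<omega>)^2))" .
qed

lemma qf_cong: "(\<And>l. l < d \<Longrightarrow> x l = y l) \<Longrightarrow> quad_form d T x = quad_form d T y"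
  unfolding quad_form_def by (intro sum.cong refl) auto

context setting begin

definition "gQ i v = quad_form d TS (\<lambda>l. v l - mu i l)"

lemma gQ_meas[measurable]: "gQ i \<in> borel_measurable (PiM {..<d} (\<lambda>_. borel))"
  unfolding gQ_def quad_form_def by measurable

lemma Qf_gQ: "Qf \<beta> = (\<lambda>\<omega>. gQ (fst \<beta>) (gv \<beta> \<omega>))"
  unfolding Qf_def gQ_def Yv_def gv_def by (intro ext qf_cong) auto

definition "trS i = mat_tr_prod d TS (Sigma i)"

lemma D_orth:
  assumes "\<beta> \<in> I" "\<gamma> \<in> I" "\<beta> \<noteq> \<gamma>"
  shows "integrable M (\<lambda>\<omega>. (Qf \<beta> \<omega> - trS (fst \<beta>)) * (Qf \<gamma> \<omega> - trS (fst \<gamma>)))"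
    "expectation (\<lambda>\<omega>. (Qf \<beta> \<omega> - trS (fst \<beta>)) * (Qf \<gamma> \<omega> - trS (fst \<gamma>))) = 0"
proof -
  have m: "(\<lambda>v. gQ i v - t) \<in> borel_measurable (PiM {..<d} (\<lambda>_. borel))" for i t by measurable
  have ii: "integrable M (\<lambda>\<omega>. gQ (fst \<delta>) (gv \<delta> \<omega>) - trS (fst \<delta>))"
       "expectation (\<lambda>\<omega>. gQ (fst \<delta>) (gv \<delta> \<omega>) - trS (fst \<delta>)) = 0" if "\<delta> \<in> I" for \<delta>
    using Q_mom(1,2)[OF that] unfolding Qf_gQ trS_def by (auto simp: prob_space)
  note R = ind2[OF assms m[of "fst \<beta>" "trS (fst \<beta>)"] m[of "fst \<gamma>" "trS (fst \<gamma>)"] ii(1)[OF assms(1)] ii(1)[OF assms(2)]]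
  show "integrable M (\<lambda>\<omega>. (Qf \<beta> \<omega> - trS (fst \<beta>)) * (Qf \<gamma> \<omega> - trS (fst \<gamma>)))"
    unfolding Qf_gQ using R(2) .
  show "expectation (\<lambda>\<omega>. (Qf \<beta> \<omega> - trS (fst \<beta>)) * (Qf \<gamma> \<omega> - trS (fst \<gamma>))) = 0"
    unfolding Qf_gQ using R(1) ii(2)[OF assms(1)] by simp
qed

definition "Gs = Product_Type.Sigma {..<a} (\<lambda>i. Product_Type.Sigma {..<n i} (\<lambda>p. {..<p}))"

lemma I_Sigma: "I = Product_Type.Sigma {..<a} (\<lambda>i. {..<n i})"
  unfolding I_def by auto

lemma finite_I: "finite I" unfolding I_Sigma by auto
lemma finite_Gs: "finite Gs" unfolding Gs_def by auto

lemma S1_mom: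
  fixes w :: "nat \<Rightarrow> real"
  shows "integrable M (\<lambda>\<omega>. (\<Sum>\<beta>\<in>I. w (fst \<beta>) * (Qf \<beta> \<omega> - trS (fst \<beta>)))^2)"
    "expectation (\<lambda>\<omega>. (\<Sum>\<beta>\<in>I. w (fst \<beta>) * (Qf \<beta> \<omega> - trS (fst \<beta>)))^2) =
      (\<Sum>\<beta>\<in>I. (w (fst \<beta>))^2 * (2 * tau (fst \<beta>)))"
proof -
  let ?f = "\<lambda>\<beta> \<omega>. w (fst \<beta>) * (Qf \<beta> \<omega> - trS (fst \<beta>))"
  have i: "integrable M (\<lambda>\<omega>. ?f \<alpha> \<omega> * ?f \<beta> \<omega>)" if "\<alpha> \<in> I" "\<beta> \<in> I" for \<alpha> \<beta>
  proof (cases "\<alpha> = \<beta>")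
    case True
    then show ?thesis using Q_mom(3)[OF that(1)] unfolding trS_def by (simp add: power2_eq_square mult_ac)
  next
    case False
    have e: "(\<lambda>\<omega>. ?f \<alpha> \<omega> * ?f \<beta> \<omega>) = (\<lambda>\<omega>. (w (fst \<alpha>) * w (fst \<beta>)) * ((Qf \<alpha> \<omega> - trS (fst \<alpha>)) * (Qf \<beta> \<omega> - trS (fst \<beta>))))"
      by (simp add: mult_ac)
    show ?thesis unfolding e using D_orth(1)[OF that False] by simp
  qed
  have z: "expectation (\<lambda>\<omega>. ?f \<alpha> \<omega> * ?f \<beta> \<omega>) = 0" if "\<alpha> \<in> I" "\<beta> \<in> I" "\<alpha> \<noteq> \<beta>" for \<alpha> \<beta>
  proof -
    have e: "(\<lambda>\<omega>. ?f \<alpha> \<omega> * ?f \<beta> \<omega>) = (\<lambda>\<omega>. (w (fst \<alpha>) * w (fst \<beta>)) * ((Qf \<alpha> \<omega> - trS (fst \<alpha>)) * (Qf \<beta> \<omega> - trS (fst \<beta>))))"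
      by (simp add: mult_ac)
    show ?thesis unfolding e using D_orth(2)[OF that] by simp
  qed
  note O = orth_sum[OF finite_I i z]
  show "integrable M (\<lambda>\<omega>. (\<Sum>\<beta>\<in>I. w (fst \<beta>) * (Qf \<beta> \<omega> - trS (fst \<beta>)))^2)" using O(1) .
  have "expectation (\<lambda>\<omega>. (?f \<beta> \<omega>)^2) = (w (fst \<beta>))^2 * (2 * tau (fst \<beta>))" if "\<beta> \<in> I" for \<beta>
  proof -
    have e: "(\<lambda>\<omega>. (?f \<beta> \<omega>)^2) = (\<lambda>\<omega>. (w (fst \<beta>))^2 * (Qf \<beta> \<omega> - trS (fst \<beta>))^2)"
      by (simp add: power_mult_distrib)
    show ?thesis unfolding e using Q_mom(4)[OF that] unfolding trS_def by simp
  qed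
  then have "(\<Sum>\<beta>\<in>I. expectation (\<lambda>\<omega>. (?f \<beta> \<omega>)^2)) = (\<Sum>\<beta>\<in>I. (w (fst \<beta>))^2 * (2 * tau (fst \<beta>)))"
    by (intro sum.cong refl) auto
  with O(2) show "expectation (\<lambda>\<omega>. (\<Sum>\<beta>\<in>I. w (fst \<beta>) * (Qf \<beta> \<omega> - trS (fst \<beta>)))^2) =
      (\<Sum>\<beta>\<in>I. (w (fst \<beta>))^2 * (2 * tau (fst \<beta>)))" by simp
qed

definition "Bg \<gamma> = Bf (fst \<gamma>, fst (snd \<gamma>)) (fst \<gamma>, snd (snd \<gamma>))"

lemma Gs_mem: "\<gamma> \<in> Gs \<Longrightarrow> (fst \<gamma>, fst (snd \<gamma>)) \<in> I \<and> (fst \<gamma>, snd (snd \<gamma>)) \<in> I \<and> snd (snd \<gamma>) < fst (snd \<gamma>)"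
  unfolding Gs_def I_def by auto

lemma Wm_tau: "Wm i i = tau i" unfolding Wm_def tau_def by (simp add: power2_eq_square)

lemma S2_mom:
  fixes w :: "nat \<Rightarrow> real"
  shows "integrable M (\<lambda>\<omega>. (\<Sum>\<gamma>\<in>Gs. w (fst \<gamma>) * Bg \<gamma> \<omega>)^2)"
    "expectation (\<lambda>\<omega>. (\<Sum>\<gamma>\<in>Gs. w (fst \<gamma>) * Bg \<gamma> \<omega>)^2) = (\<Sum>\<gamma>\<in>Gs. (w (fst \<gamma>))^2 * tau (fst \<gamma>))"
proof -
  let ?f = "\<lambda>\<gamma> \<omega>. w (fst \<gamma>) * Bg \<gamma> \<omega>"
  have e: "(\<lambda>\<omega>. ?f \<alpha> \<omega> * ?f \<beta> \<omega>) = (\<lambda>\<omega>. (w (fst \<alpha>) * w (fst \<beta>)) * (Bg \<alpha> \<omega> * Bg \<beta> \<omega>))" for \<alpha> \<beta>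
    by (simp add: mult_ac)
  have BM: "integrable M (\<lambda>\<omega>. Bg \<alpha> \<omega> * Bg \<beta> \<omega>) \<and> expectation (\<lambda>\<omega>. Bg \<alpha> \<omega> * Bg \<beta> \<omega>) =
     (if \<alpha> = \<beta> then tau (fst \<alpha>) else 0)" if "\<alpha> \<in> Gs" "\<beta> \<in> Gs" for \<alpha> \<beta>
  proof -
    obtain i p q where a: "\<alpha> = (i, p, q)" by (cases \<alpha>) auto
    obtain i' p' q' where b: "\<beta> = (i', p', q')" by (cases \<beta>) auto
    have ma: "(i, p) \<in> I" "(i, q) \<in> I" "q < p" using Gs_mem[OF that(1)] a by auto
    have mb: "(i', p') \<in> I" "(i', q') \<in> I" "q' < p'" using Gs_mem[OF that(2)] b by auto
    have ne: "(i, p) \<noteq> (i, q)" "(i', p') \<noteq> (i', q')" using ma mb by auto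
    note B = B_mom[OF ma(1,2) mb(1,2) ne]
    have c: "((i, p) = (i', p') \<and> (i, q) = (i', q') \<or> (i, p) = (i', q') \<and> (i, q) = (i', p')) \<longleftrightarrow> \<alpha> = \<beta>"
      using ma mb a b by auto
    show ?thesis using B unfolding Bg_def a b c[unfolded a b] by (auto simp: Wm_tau)
  qed
  have i: "integrable M (\<lambda>\<omega>. ?f \<alpha> \<omega> * ?f \<beta> \<omega>)" if "\<alpha> \<in> Gs" "\<beta> \<in> Gs" for \<alpha> \<beta>
    unfolding e using BM[OF that] by simp
  have z: "expectation (\<lambda>\<omega>. ?f \<alpha> \<omega> * ?f \<beta> \<omega>) = 0" if "\<alpha> \<in> Gs" "\<beta> \<in> Gs" "\<alpha> \<noteq> \<beta>" for \<alpha> \<beta>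
    unfolding e using BM[OF that(1,2)] that(3) by simp
  note O = orth_sum[OF finite_Gs i z]
  show "integrable M (\<lambda>\<omega>. (\<Sum>\<gamma>\<in>Gs. w (fst \<gamma>) * Bg \<gamma> \<omega>)^2)" using O(1) .
  have "expectation (\<lambda>\<omega>. (?f \<gamma> \<omega>)^2) = (w (fst \<gamma>))^2 * tau (fst \<gamma>)" if "\<gamma> \<in> Gs" for \<gamma>
  proof -
    have e2: "(\<lambda>\<omega>. (?f \<gamma> \<omega>)^2) = (\<lambda>\<omega>. (w (fst \<gamma>) * w (fst \<gamma>)) * (Bg \<gamma> \<omega> * Bg \<gamma> \<omega>))"
      by (simp add: power2_eq_square mult_ac)
    show ?thesis unfolding e2 using BM[OF that that] by (simp add: power2_eq_square)
  qed
  then have "(\<Sum>\<gamma>\<in>Gs. expectation (\<lambda>\<omega>. (?f \<gamma> \<omega>)^2)) = (\<Sum>\<gamma>\<in>Gs. (w (fst \<gamma>))^2 * tau (fst \<gamma>))"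
    by (intro sum.cong refl) auto
  with O(2) show "expectation (\<lambda>\<omega>. (\<Sum>\<gamma>\<in>Gs. w (fst \<gamma>) * Bg \<gamma> \<omega>)^2) = (\<Sum>\<gamma>\<in>Gs. (w (fst \<gamma>))^2 * tau (fst \<gamma>))" by simp
qed

end



lemma reo:
  fixes f :: "nat \<Rightarrow> nat \<Rightarrow> nat \<Rightarrow> nat \<Rightarrow> real"
  shows "(\<Sum>k<d. \<Sum>k'<d. \<Sum>x<d. \<Sum>y<d. f k k' x y) = (\<Sum>x<d. \<Sum>y<d. \<Sum>k<d. \<Sum>k'<d. f k k' x y)"
proof -
  have "(\<Sum>k<d. \<Sum>k'<d. \<Sum>x<d. \<Sum>y<d. f k k' x y) = (\<Sum>k<d. \<Sum>x<d. \<Sum>k'<d. \<Sum>y<d. f k k' x y)"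
    by (rule sum.cong[OF refl], rule sum.swap)
  also have "\<dots> = (\<Sum>x<d. \<Sum>k<d. \<Sum>k'<d. \<Sum>y<d. f k k' x y)"
    by (rule sum.swap)
  also have "\<dots> = (\<Sum>x<d. \<Sum>k<d. \<Sum>y<d. \<Sum>k'<d. f k k' x y)"
    by (rule sum.cong[OF refl], rule sum.cong[OF refl], rule sum.swap)
  also have "\<dots> = (\<Sum>x<d. \<Sum>y<d. \<Sum>k<d. \<Sum>k'<d. f k k' x y)"
    by (rule sum.cong[OF refl], rule sum.swap)
  finally show ?thesis .
qed

lemma reo2:
  fixes h :: "nat \<Rightarrow> nat \<Rightarrow> nat \<Rightarrow> nat \<Rightarrow> real"
  shows "(\<Sum>l<d. \<Sum>m<d. \<Sum>r<d. \<Sum>s<d. h l m r s) = (\<Sum>l<d. \<Sum>s<d. \<Sum>r<d. \<Sum>m<d. h l m r s)"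
proof -
  have "(\<Sum>l<d. \<Sum>m<d. \<Sum>r<d. \<Sum>s<d. h l m r s) = (\<Sum>l<d. \<Sum>m<d. \<Sum>s<d. \<Sum>r<d. h l m r s)"
    by (rule sum.cong[OF refl], rule sum.cong[OF refl], rule sum.swap)
  also have "\<dots> = (\<Sum>l<d. \<Sum>s<d. \<Sum>m<d. \<Sum>r<d. h l m r s)"
    by (rule sum.cong[OF refl], rule sum.swap)
  also have "\<dots> = (\<Sum>l<d. \<Sum>s<d. \<Sum>r<d. \<Sum>m<d. h l m r s)"
    by (rule sum.cong[OF refl], rule sum.cong[OF refl], rule sum.swap)
  finally show ?thesis .
qed

lemma trW:
  assumes T: "sym_idem d T"
    and sA: "\<And>l m. l < d \<Longrightarrow> m < d \<Longrightarrow> A l m = A m l"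
  shows "(\<Sum>l<d. \<Sum>m<d. (\<Sum>r<d. T l r * B r m) * (\<Sum>s<d. T m s * A s l)) =
     (\<Sum>k<d. \<Sum>k'<d. bil d A (\<lambda>l. T l k) (\<lambda>l. T l k') * bil d B (\<lambda>l. T l k) (\<lambda>l. T l k'))"
proof -
  have sy: "\<And>p q. p < d \<Longrightarrow> q < d \<Longrightarrow> T p q = T q p" and id: "\<And>p q. p < d \<Longrightarrow> q < d \<Longrightarrow> (\<Sum>r<d. T p r * T r q) = T p q"
    using T unfolding sym_idem_def by auto
  have TT: "(\<Sum>k<d. T p k * T q k) = T p q" if "p < d" "q < d" for p q
  proof -
    have "(\<Sum>k<d. T p k * T q k) = (\<Sum>k<d. T p k * T k q)" by (intro sum.cong refl) (simp add: sy that)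
    then show ?thesis using id[OF that] by simp
  qed
  define W' where "W' = (\<Sum>x<d. \<Sum>y<d. \<Sum>p<d. \<Sum>q<d. A x y * T p x * B p q * T q y)"
  have "(\<Sum>l<d. \<Sum>m<d. (\<Sum>r<d. T l r * B r m) * (\<Sum>s<d. T m s * A s l)) =
      (\<Sum>l<d. \<Sum>m<d. \<Sum>r<d. \<Sum>s<d. A l s * T r l * B r m * T m s)"
  proof (intro sum.cong refl)
    fix l m assume lm: "l \<in> {..<d}" "m \<in> {..<d}"
    have "(\<Sum>r<d. T l r * B r m) * (\<Sum>s<d. T m s * A s l) = (\<Sum>r<d. \<Sum>s<d. T l r * B r m * (T m s * A s l))"
      by (simp add: sum_product)
    also have "\<dots> = (\<Sum>r<d. \<Sum>s<d. A l s * T r l * B r m * T m s)"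
    proof (intro sum.cong refl)
      fix r s assume "r \<in> {..<d}" "s \<in> {..<d}"
      then show "T l r * B r m * (T m s * A s l) = A l s * T r l * B r m * T m s"
        using lm sy[of l r] sA[of s l] by simp
    qed
    finally show "(\<Sum>r<d. T l r * B r m) * (\<Sum>s<d. T m s * A s l) = (\<Sum>r<d. \<Sum>s<d. A l s * T r l * B r m * T m s)" .
  qed
  also have "\<dots> = W'" unfolding W'_def by (rule reo2)
  finally have L: "(\<Sum>l<d. \<Sum>m<d. (\<Sum>r<d. T l r * B r m) * (\<Sum>s<d. T m s * A s l)) = W'" .
  have inner: "(\<Sum>k<d. \<Sum>k'<d. T x k * T y k' * bil d B (\<lambda>l. T l k) (\<lambda>l. T l k')) =
      (\<Sum>p<d. \<Sum>q<d. T p x * B p q * T q y)" if xy: "x < d" "y < d" for x y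
  proof -
    have "(\<Sum>k<d. \<Sum>k'<d. T x k * T y k' * bil d B (\<lambda>l. T l k) (\<lambda>l. T l k')) =
        (\<Sum>k<d. \<Sum>k'<d. \<Sum>p<d. \<Sum>q<d. B p q * (T x k * T p k) * (T y k' * T q k'))"
      unfolding bil_def by (simp add: sum_distrib_left mult_ac)
    also have "\<dots> = (\<Sum>p<d. \<Sum>q<d. \<Sum>k<d. \<Sum>k'<d. B p q * (T x k * T p k) * (T y k' * T q k'))"
      by (rule reo)
    also have "\<dots> = (\<Sum>p<d. \<Sum>q<d. B p q * (\<Sum>k<d. T x k * T p k) * (\<Sum>k'<d. T y k' * T q k'))"
      by (simp add: sum_distrib_left sum_distrib_right mult_ac)
    also have "\<dots> = (\<Sum>p<d. \<Sum>q<d. T p x * B p q * T q y)"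
    proof (intro sum.cong refl)
      fix p q assume "p \<in> {..<d}" "q \<in> {..<d}"
      then show "B p q * (\<Sum>k<d. T x k * T p k) * (\<Sum>k'<d. T y k' * T q k') = T p x * B p q * T q y"
        using TT[of x p] TT[of y q] xy sy[of x p] sy[of y q] by simp
    qed
    finally show ?thesis .
  qed
  have "(\<Sum>k<d. \<Sum>k'<d. bil d A (\<lambda>l. T l k) (\<lambda>l. T l k') * bil d B (\<lambda>l. T l k) (\<lambda>l. T l k')) =
      (\<Sum>k<d. \<Sum>k'<d. \<Sum>x<d. \<Sum>y<d. A x y * (T x k * T y k' * bil d B (\<lambda>l. T l k) (\<lambda>l. T l k')))"
  proof (intro sum.cong refl)
    fix k k'
    show "bil d A (\<lambda>l. T l k) (\<lambda>l. T l k') * bil d B (\<lambda>l. T l k) (\<lambda>l. T l k') =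
      (\<Sum>x<d. \<Sum>y<d. A x y * (T x k * T y k' * bil d B (\<lambda>l. T l k) (\<lambda>l. T l k')))"
      unfolding bil_def[of d A] sum_distrib_right by (intro sum.cong refl) (simp add: mult_ac)
  qed
  also have "\<dots> = (\<Sum>x<d. \<Sum>y<d. \<Sum>k<d. \<Sum>k'<d. A x y * (T x k * T y k' * bil d B (\<lambda>l. T l k) (\<lambda>l. T l k')))"
    by (rule reo)
  also have "\<dots> = (\<Sum>x<d. \<Sum>y<d. A x y * (\<Sum>k<d. \<Sum>k'<d. T x k * T y k' * bil d B (\<lambda>l. T l k) (\<lambda>l. T l k')))"
    by (simp add: sum_distrib_left)
  also have "\<dots> = (\<Sum>x<d. \<Sum>y<d. A x y * (\<Sum>p<d. \<Sum>q<d. T p x * B p q * T q y))"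
    by (intro sum.cong refl) (simp add: inner)
  also have "\<dots> = W'" unfolding W'_def by (simp add: sum_distrib_left mult_ac)
  finally show ?thesis using L by simp
qed




context setting begin

definition "vv i = real (\<Sum>i'<a. n i') / real (n i)"
definition "BI = block_index a d"
definition "Rm j l m = (\<Sum>r<d. TS l r * Sigma j r m)"
definition "TVm = mat_mult BI (kron TW TS) (blockdiag (\<lambda>i l m. vv i * Sigma i l m))"

lemma BI_mem: "p \<in> BI \<longleftrightarrow> fst p < a \<and> snd p < d"
  unfolding BI_def block_index_def by (cases p) auto

lemma TV_eq:
  assumes "p \<in> BI" "q \<in> BI"
  shows "TVm p q = TW (fst p) (fst q) * vv (fst q) * Rm (fst q) (snd p) (snd q)"
proof -
  have q: "fst q < a" using assms BI_mem by auto
  have inner: "(\<Sum>y<d. kron TW TS p (x, y) * blockdiag (\<lambda>i l m. vv i * Sigma i l m) (x, y) q) =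
     (if x = fst q then TW (fst p) (fst q) * vv (fst q) * Rm (fst q) (snd p) (snd q) else 0)" for x
  proof (cases "x = fst q")
    case True
    then show ?thesis unfolding kron_def blockdiag_def Rm_def by (simp add: sum_distrib_left mult_ac)
  next
    case False
    then show ?thesis unfolding kron_def blockdiag_def by simp
  qed
  have "TVm p q = (\<Sum>x<a. \<Sum>y<d. kron TW TS p (x, y) * blockdiag (\<lambda>i l m. vv i * Sigma i l m) (x, y) q)"
    unfolding TVm_def mat_mult_def BI_def block_index_def sum.cartesian_product' ..
  also have "\<dots> = (\<Sum>x<a. if x = fst q then TW (fst p) (fst q) * vv (fst q) * Rm (fst q) (snd p) (snd q) else 0)"
    by (simp only: inner)
  also have "\<dots> = TW (fst p) (fst q) * vv (fst q) * Rm (fst q) (snd p) (snd q)"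
    using q by (simp add: sum.delta')
  finally show ?thesis .
qed

lemma trace_eq:
  "mat_trace BI (mat_mult BI TVm TVm) = (\<Sum>i<a. \<Sum>j<a. (TW i j)^2 * vv i * vv j * Wm i j)"
proof -
  have syW: "\<And>p q. p < a \<Longrightarrow> q < a \<Longrightarrow> TW p q = TW q p" using TW unfolding sym_idem_def by auto
  have "mat_trace BI (mat_mult BI TVm TVm) = (\<Sum>p\<in>BI. \<Sum>q\<in>BI. TVm p q * TVm q p)"
    unfolding mat_trace_def mat_mult_def ..
  also have "\<dots> = (\<Sum>p\<in>BI. \<Sum>q\<in>BI. TW (fst p) (fst q) * vv (fst q) * Rm (fst q) (snd p) (snd q) *
      (TW (fst q) (fst p) * vv (fst p) * Rm (fst p) (snd q) (snd p)))"
    by (intro sum.cong refl) (simp add: TV_eq)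
  also have "\<dots> = (\<Sum>i<a. \<Sum>l<d. \<Sum>j<a. \<Sum>m<d. TW i j * vv j * Rm j l m * (TW j i * vv i * Rm i m l))"
    unfolding BI_def block_index_def sum.cartesian_product' by simp
  also have "\<dots> = (\<Sum>i<a. \<Sum>j<a. \<Sum>l<d. \<Sum>m<d. TW i j * vv j * Rm j l m * (TW j i * vv i * Rm i m l))"
    by (rule sum.cong[OF refl], rule sum.swap)
  also have "\<dots> = (\<Sum>i<a. \<Sum>j<a. (TW i j)^2 * vv i * vv j * (\<Sum>l<d. \<Sum>m<d. Rm j l m * Rm i m l))"
  proof (intro sum.cong refl)
    fix i j assume "i \<in> {..<a}" "j \<in> {..<a}"
    then have "TW j i = TW i j" using syW by auto
    then show "(\<Sum>l<d. \<Sum>m<d. TW i j * vv j * Rm j l m * (TW j i * vv i * Rm i m l)) =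
        (TW i j)^2 * vv i * vv j * (\<Sum>l<d. \<Sum>m<d. Rm j l m * Rm i m l)"
      by (simp add: sum_distrib_left power2_eq_square mult_ac)
  qed
  also have "\<dots> = (\<Sum>i<a. \<Sum>j<a. (TW i j)^2 * vv i * vv j * Wm i j)"
  proof (intro sum.cong refl)
    fix i j assume ij: "i \<in> {..<a}" "j \<in> {..<a}"
    have sA: "\<And>l m. l < d \<Longrightarrow> m < d \<Longrightarrow> Sigma i l m = Sigma i m l" using Sigma_pd[of i] ij unfolding sym_posdef_def by auto
    have "(\<Sum>l<d. \<Sum>m<d. Rm j l m * Rm i m l) = Wm i j"
      unfolding Rm_def Wm_def col_def by (rule trW[OF TS sA])
    then show "(TW i j)^2 * vv i * vv j * (\<Sum>l<d. \<Sum>m<d. Rm j l m * Rm i m l) = (TW i j)^2 * vv i * vv j * Wm i j"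
      by simp
  qed
  finally show ?thesis .
qed

lemma tau_nonneg: "tau i \<ge> 0" unfolding tau_def by (intro sum_nonneg) auto

lemma Wm_nonneg:
  assumes "i < a" "j < a"
  shows "Wm i j \<ge> 0"
proof (cases "i = j")
  case True
  then show ?thesis using tau_nonneg Wm_tau by simp
next
  case False
  have m: "(i, 0) \<in> I" "(j, 0) \<in> I" using assms n_ge2 unfolding I_def by fastforce+
  have ne: "(i, 0) \<noteq> (j, 0)" using False by simp
  note B = B_mom[OF m m ne ne]
  have "Wm i j = expectation (\<lambda>\<omega>. Bf (i, 0) (j, 0) \<omega> * Bf (i, 0) (j, 0) \<omega>)" using B(2) by simp
  also have "\<dots> \<ge> 0" by (intro integral_nonneg_AE) auto
  finally show ?thesis .
qed

lemma vv_nonneg: "vv i \<ge> 0" unfolding vv_def by (simp add: divide_nonneg_nonneg sum_nonneg)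

lemma den_lb:
  "mat_trace BI (mat_mult BI TVm TVm) \<ge> (\<Sum>i<a. (vv i * TW i i)^2 * tau i)"
proof -
  have nn: "0 \<le> (TW i j)^2 * vv i * vv j * Wm i j" if "i < a" "j < a" for i j
    using Wm_nonneg[OF that] vv_nonneg[of i] vv_nonneg[of j] by simp
  have "(\<Sum>i<a. (vv i * TW i i)^2 * tau i) = (\<Sum>i<a. (TW i i)^2 * vv i * vv i * Wm i i)"
    by (intro sum.cong refl) (simp add: Wm_tau power2_eq_square mult_ac)
  also have "\<dots> \<le> (\<Sum>i<a. \<Sum>j<a. (TW i j)^2 * vv i * vv j * Wm i j)"
  proof (intro sum_mono)
    fix i assume i: "i \<in> {..<a}"
    show "(TW i i)^2 * vv i * vv i * Wm i i \<le> (\<Sum>j<a. (TW i j)^2 * vv i * vv j * Wm i j)"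
      using member_le_sum[of i "{..<a}" "\<lambda>j. (TW i j)^2 * vv i * vv j * Wm i j"] i nn by auto
  qed
  finally show ?thesis unfolding trace_eq .
qed

end



lemma sum_pairs:
  fixes f :: "nat \<Rightarrow> real"
  shows "(\<Sum>p<n. \<Sum>q<p. f p + f q) = (real n - 1) * (\<Sum>j<n. f j)"
proof (induction n)
  case 0 then show ?case by simp
next
  case (Suc n)
  have "(\<Sum>p<Suc n. \<Sum>q<p. f p + f q) = (\<Sum>p<n. \<Sum>q<p. f p + f q) + (\<Sum>q<n. f n + f q)" by simp
  also have "\<dots> = (real n - 1) * (\<Sum>j<n. f j) + (real n * f n + (\<Sum>q<n. f q))"
    using Suc by (simp add: sum.distrib)
  also have "\<dots> = (real (Suc n) - 1) * (\<Sum>j<Suc n. f j)" by (simp add: algebra_simps)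
  finally show ?case .
qed

lemma choose2_real: "2 * real (n choose 2) = real n * (real n - 1)"
proof (induction n)
  case 0 then show ?case by simp
next
  case (Suc n)
  have "Suc n choose 2 = n + (n choose 2)" by (simp add: numeral_2_eq_2)
  then show ?case using Suc by (simp add: algebra_simps)
qed

lemma sum_lt_real: "2 * (\<Sum>p<n. real p) = real n * (real n - 1)"
  by (induction n) (auto simp: algebra_simps)

lemma alg_A1:
  fixes A N Q B S t :: real
  assumes N: "N \<ge> 2" and A: "A = ((N - 1) * Q - 2 * B) / (N * (N - 1))" and S: "S = Q - N * t"
  shows "A - t = 1 / N * S - 2 / (N * (N - 1)) * B"
proof -
  have n0: "N \<noteq> 0" "N - 1 \<noteq> 0" using N by auto
  have "A = (N - 1) * Q / (N * (N - 1)) - 2 * B / (N * (N - 1))" unfolding A by (rule diff_divide_distrib)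
  also have "(N - 1) * Q / (N * (N - 1)) = Q / N" using n0 by simp
  finally have A': "A = Q / N - 2 * B / (N * (N - 1))" .
  have "1 / N * S = Q / N - t" unfolding S using n0 by (simp add: field_simps)
  then show ?thesis unfolding A' by simp
qed

context setting begin

lemma qf_split:
  assumes "i < a"
  shows "quad_form d TS (\<lambda>l. X i p l \<omega> - X i q l \<omega>) = Qf (i, p) \<omega> + Qf (i, q) \<omega> - 2 * Bf (i, p) (i, q) \<omega>"
proof -
  have sy: "\<And>l m. l < d \<Longrightarrow> m < d \<Longrightarrow> TS l m = TS m l" using TS unfolding sym_idem_def by auto
  have "(\<lambda>l. X i p l \<omega> - X i q l \<omega>) = (\<lambda>l. Yv (i, p) \<omega> l - Yv (i, q) \<omega> l)"
    unfolding Yv_def by auto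
  then show ?thesis unfolding Qf_def Bf_def using qf_add(2)[OF sy] by simp
qed

lemma A1_dec:
  assumes i: "i < a"
  shows "A1 d (n i) TS (\<lambda>j l. X i j l \<omega>) - trS i =
    1 / real (n i) * (\<Sum>j<n i. Qf (i, j) \<omega> - trS i)
    - 2 / (real (n i) * (real (n i) - 1)) * (\<Sum>p<n i. \<Sum>q<p. Bf (i, p) (i, q) \<omega>)"
proof -
  have n2: "real (n i) \<ge> 2" using n_ge2[OF i] by simp
  let ?N = "real (n i)"
  note alg = alg_A1
  have "(\<Sum>p<n i. \<Sum>q<p. quad_form d TS (\<lambda>l. X i p l \<omega> - X i q l \<omega>)) =
      (\<Sum>p<n i. \<Sum>q<p. Qf (i, p) \<omega> + Qf (i, q) \<omega>) - 2 * (\<Sum>p<n i. \<Sum>q<p. Bf (i, p) (i, q) \<omega>)"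
    by (simp add: qf_split[OF i] sum_subtractf sum_distrib_left)
  also have "\<dots> = (?N - 1) * (\<Sum>j<n i. Qf (i, j) \<omega>) - 2 * (\<Sum>p<n i. \<Sum>q<p. Bf (i, p) (i, q) \<omega>)"
    by (simp only: sum_pairs)
  finally have e: "(\<Sum>p<n i. \<Sum>q<p. quad_form d TS (\<lambda>l. X i p l \<omega> - X i q l \<omega>)) =
      (?N - 1) * (\<Sum>j<n i. Qf (i, j) \<omega>) - 2 * (\<Sum>p<n i. \<Sum>q<p. Bf (i, p) (i, q) \<omega>)" .
  have c: "2 * real (n i choose 2) = ?N * (?N - 1)" by (rule choose2_real)
  have "A1 d (n i) TS (\<lambda>j l. X i j l \<omega>) = ((?N - 1) * (\<Sum>j<n i. Qf (i, j) \<omega>) - 2 * (\<Sum>p<n i. \<Sum>q<p. Bf (i, p) (i, q) \<omega>)) / (?N * (?N - 1))"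
    unfolding A1_def e c by simp
  moreover have "(\<Sum>j<n i. Qf (i, j) \<omega> - trS i) = (\<Sum>j<n i. Qf (i, j) \<omega>) - ?N * trS i"
    by (simp add: sum_subtractf)
  ultimately show ?thesis using n2 alg by blast
qed

definition "cc i = vv i * TW i i"
definition "S1 \<omega> = (\<Sum>\<beta>\<in>I. (cc (fst \<beta>) / real (n (fst \<beta>))) * (Qf \<beta> \<omega> - trS (fst \<beta>)))"
definition "w2 i = 2 * cc i / (real (n i) * (real (n i) - 1))"
definition "S2 \<omega> = (\<Sum>\<gamma>\<in>Gs. w2 (fst \<gamma>) * Bg \<gamma> \<omega>)"

lemma Z_eq:
  "(\<Sum>i<a. vv i * TW i i * A1 d (n i) TS (\<lambda>j l. X i j l \<omega>)) - (\<Sum>i<a. vv i * TW i i * mat_tr_prod d TS (Sigma i))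
    = S1 \<omega> - S2 \<omega>"
proof -
  have "(\<Sum>i<a. vv i * TW i i * A1 d (n i) TS (\<lambda>j l. X i j l \<omega>)) - (\<Sum>i<a. vv i * TW i i * mat_tr_prod d TS (Sigma i))
     = (\<Sum>i<a. cc i * (A1 d (n i) TS (\<lambda>j l. X i j l \<omega>) - trS i))"
    unfolding cc_def trS_def by (simp add: sum_subtractf right_diff_distrib)
  also have "\<dots> = (\<Sum>i<a. (\<Sum>j<n i. cc i / real (n i) * (Qf (i, j) \<omega> - trS i)) -
       (\<Sum>p<n i. \<Sum>q<p. w2 i * Bf (i, p) (i, q) \<omega>))"
  proof (intro sum.cong refl)
    fix i assume "i \<in> {..<a}"
    then have i: "i < a" by simp
    have "cc i * (A1 d (n i) TS (\<lambda>j l. X i j l \<omega>) - trS i) =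
       cc i / real (n i) * (\<Sum>j<n i. Qf (i, j) \<omega> - trS i) - w2 i * (\<Sum>p<n i. \<Sum>q<p. Bf (i, p) (i, q) \<omega>)"
      unfolding A1_dec[OF i] w2_def by (simp add: algebra_simps)
    then show "cc i * (A1 d (n i) TS (\<lambda>j l. X i j l \<omega>) - trS i) = (\<Sum>j<n i. cc i / real (n i) * (Qf (i, j) \<omega> - trS i)) -
       (\<Sum>p<n i. \<Sum>q<p. w2 i * Bf (i, p) (i, q) \<omega>)" by (simp add: sum_distrib_left)
  qed
  also have "\<dots> = (\<Sum>i<a. \<Sum>j<n i. cc i / real (n i) * (Qf (i, j) \<omega> - trS i)) -
       (\<Sum>i<a. \<Sum>p<n i. \<Sum>q<p. w2 i * Bf (i, p) (i, q) \<omega>)"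
    by (simp add: sum_subtractf)
  also have "(\<Sum>i<a. \<Sum>j<n i. cc i / real (n i) * (Qf (i, j) \<omega> - trS i)) = S1 \<omega>"
    unfolding S1_def I_Sigma by (subst sum.Sigma) (auto simp: split_beta)
  also have "(\<Sum>i<a. \<Sum>p<n i. \<Sum>q<p. w2 i * Bf (i, p) (i, q) \<omega>) = S2 \<omega>"
  proof -
    have "(\<Sum>i<a. \<Sum>p<n i. \<Sum>q<p. w2 i * Bf (i, p) (i, q) \<omega>) =
        (\<Sum>i<a. \<Sum>pq\<in>Product_Type.Sigma {..<n i} (\<lambda>p. {..<p}). w2 i * Bf (i, fst pq) (i, snd pq) \<omega>)"
      by (intro sum.cong refl) (subst sum.Sigma, auto simp: split_beta)
    also have "\<dots> = S2 \<omega>"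
      unfolding S2_def Gs_def Bg_def by (subst sum.Sigma) (auto simp: split_beta)
    finally show ?thesis .
  qed
  finally show ?thesis .
qed

end



lemma alg_var:
  fixes N P c t :: real
  assumes N: "N \<ge> 2" and P: "2 * P = N * (N - 1)"
  shows "N * (c / N)^2 * (2 * t) + P * (2 * c / (N * (N - 1)))^2 * t = 2 * c^2 * t / (N - 1)"
proof -
  have P': "P = N * (N - 1) / 2" using P by simp
  have n0: "N \<noteq> 0" "N - 1 \<noteq> 0" using N by auto
  have e1: "N * (c / N)^2 * (2 * t) = 2 * c^2 * t / N" using n0 by (simp add: power2_eq_square field_simps)
  have K: "\<And>K::real. K \<noteq> 0 \<Longrightarrow> K / 2 * (2 * c / K)^2 * t = 2 * c^2 * t / K"
    by (simp add: power2_eq_square field_simps)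
  have e2: "N * (N - 1) / 2 * (2 * c / (N * (N - 1)))^2 * t = 2 * c^2 * t / (N * (N - 1))"
    using n0 by (intro K) simp
  have e3: "2 * c^2 * t / N + 2 * c^2 * t / (N * (N - 1)) = 2 * c^2 * t / (N - 1)"
  proof -
    have "2 * c^2 * t / N + 2 * c^2 * t / (N * (N - 1)) = (2 * c^2 * t * (N - 1) + 2 * c^2 * t) / (N * (N - 1))"
      using n0 by (simp add: add_divide_distrib)
    also have "2 * c^2 * t * (N - 1) + 2 * c^2 * t = (2 * c^2 * t) * N" by (simp add: algebra_simps)
    also have "(2 * c^2 * t) * N / (N * (N - 1)) = 2 * c^2 * t / (N - 1)" using n0 by simp
    finally show ?thesis .
  qed
  show ?thesis unfolding P' e1 e2 e3 ..
qed

context setting begin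

definition "mm = Min (n ` {..<a})"

lemma mm_le: "i < a \<Longrightarrow> mm \<le> n i" unfolding mm_def by (intro Min_le) auto
lemma mm_ge2: "mm \<ge> 2"
proof -
  have "mm \<in> n ` {..<a}" unfolding mm_def using a_pos by (intro Min_in) (auto simp: lessThan_empty_iff)
  then show ?thesis using n_ge2 by auto
qed

lemma lin_meas: "\<beta> \<in> I \<Longrightarrow> lin \<beta> c \<in> borel_measurable M"
  using lin_mom(1) by (blast intro: borel_measurable_integrable)

lemma S1_int: "integrable M S1"
proof -
  have "integrable M (\<lambda>\<omega>. \<Sum>\<beta>\<in>I. (cc (fst \<beta>) / real (n (fst \<beta>))) * (Qf \<beta> \<omega> - trS (fst \<beta>)))"
  proof (intro Bochner_Integration.integrable_sum integrable_mult_right Bochner_Integration.integrable_diff)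
    fix \<beta> assume "\<beta> \<in> I"
    then show "integrable M (Qf \<beta>)" using Q_mom(1) by blast
  qed auto
  then show ?thesis unfolding S1_def[abs_def] .
qed

lemma S2_meas: "S2 \<in> borel_measurable M"
proof -
  have "(\<lambda>\<omega>. \<Sum>\<gamma>\<in>Gs. w2 (fst \<gamma>) * (\<Sum>k<d. lin (fst \<gamma>, fst (snd \<gamma>)) (col k) \<omega> * lin (fst \<gamma>, snd (snd \<gamma>)) (col k) \<omega>))
     \<in> borel_measurable M"
    using lin_meas Gs_mem by (intro borel_measurable_sum borel_measurable_times) auto
  then show ?thesis unfolding S2_def[abs_def] Bg_def Bf_cols .
qed

lemma ES:
  "integrable M (\<lambda>\<omega>. (S1 \<omega>)^2)" "integrable M (\<lambda>\<omega>. (S2 \<omega>)^2)"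
  "expectation (\<lambda>\<omega>. (S1 \<omega>)^2) + expectation (\<lambda>\<omega>. (S2 \<omega>)^2) \<le> 2 / (real mm - 1) * (\<Sum>i<a. (cc i)^2 * tau i)"
proof -
  note A = S1_mom[of "\<lambda>i. cc i / real (n i)", folded S1_def]
  note B = S2_mom[of w2, folded S2_def]
  show "integrable M (\<lambda>\<omega>. (S1 \<omega>)^2)" "integrable M (\<lambda>\<omega>. (S2 \<omega>)^2)" using A(1) B(1) by auto
  have a: "(\<Sum>\<beta>\<in>I. (cc (fst \<beta>) / real (n (fst \<beta>)))^2 * (2 * tau (fst \<beta>))) =
      (\<Sum>i<a. real (n i) * (cc i / real (n i))^2 * (2 * tau i))"
  proof -
    have "(\<Sum>i<a. real (n i) * (cc i / real (n i))^2 * (2 * tau i)) = (\<Sum>i<a. \<Sum>j<n i. (cc i / real (n i))^2 * (2 * tau i))"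
      by (simp add: mult.assoc)
    also have "\<dots> = (\<Sum>(i, j)\<in>Product_Type.Sigma {..<a} (\<lambda>i. {..<n i}). (cc i / real (n i))^2 * (2 * tau i))"
      by (rule sum.Sigma) auto
    also have "\<dots> = (\<Sum>\<beta>\<in>I. (cc (fst \<beta>) / real (n (fst \<beta>)))^2 * (2 * tau (fst \<beta>)))"
      unfolding I_Sigma by (simp add: split_beta)
    finally show ?thesis by simp
  qed
  have cardG: "card (Product_Type.Sigma {..<n i} (\<lambda>p. {..<p})) = (\<Sum>p<n i. p)" for i
    by (simp add: card_SigmaI)
  have b: "(\<Sum>\<gamma>\<in>Gs. (w2 (fst \<gamma>))^2 * tau (fst \<gamma>)) =
      (\<Sum>i<a. (\<Sum>p<n i. real p) * (w2 i)^2 * tau i)"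
  proof -
    have "(\<Sum>i<a. (\<Sum>p<n i. real p) * (w2 i)^2 * tau i) = (\<Sum>i<a. \<Sum>pq\<in>Product_Type.Sigma {..<n i} (\<lambda>p. {..<p}). (w2 i)^2 * tau i)"
      using cardG by (simp add: mult.assoc flip: of_nat_sum)
    also have "\<dots> = (\<Sum>(i, pq)\<in>Gs. (w2 i)^2 * tau i)"
      unfolding Gs_def by (rule sum.Sigma) auto
    also have "\<dots> = (\<Sum>\<gamma>\<in>Gs. (w2 (fst \<gamma>))^2 * tau (fst \<gamma>))"
      by (simp add: split_beta)
    finally show ?thesis by simp
  qed
  have "expectation (\<lambda>\<omega>. (S1 \<omega>)^2) + expectation (\<lambda>\<omega>. (S2 \<omega>)^2) =
     (\<Sum>i<a. real (n i) * (cc i / real (n i))^2 * (2 * tau i) + (\<Sum>p<n i. real p) * (w2 i)^2 * tau i)"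
    unfolding A(2) B(2) a b by (simp add: sum.distrib)
  also have "\<dots> = (\<Sum>i<a. 2 * (cc i)^2 * tau i / (real (n i) - 1))"
  proof (intro sum.cong refl)
    fix i assume "i \<in> {..<a}"
    then have "real (n i) \<ge> 2" using n_ge2 by simp
    then show "real (n i) * (cc i / real (n i))^2 * (2 * tau i) + (\<Sum>p<n i. real p) * (w2 i)^2 * tau i =
        2 * (cc i)^2 * tau i / (real (n i) - 1)"
      unfolding w2_def by (rule alg_var) (rule sum_lt_real)
  qed
  also have "\<dots> \<le> (\<Sum>i<a. 2 / (real mm - 1) * ((cc i)^2 * tau i))"
  proof (intro sum_mono)
    fix i assume "i \<in> {..<a}"
    then have h1: "real mm - 1 \<le> real (n i) - 1" using mm_le by simp
    have h2: "real mm - 1 > 0" using mm_ge2 by simp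
    have h3: "2 * ((cc i)^2 * tau i) \<ge> 0" using tau_nonneg by simp
    have "2 * (cc i)^2 * tau i / (real (n i) - 1) = 2 * ((cc i)^2 * tau i) / (real (n i) - 1)" by simp
    also have "\<dots> \<le> 2 * ((cc i)^2 * tau i) / (real mm - 1)"
      by (rule divide_left_mono[OF h1 h3]) (use h1 h2 in simp)
    also have "\<dots> = 2 / (real mm - 1) * ((cc i)^2 * tau i)" by simp
    finally show "2 * (cc i)^2 * tau i / (real (n i) - 1) \<le> 2 / (real mm - 1) * ((cc i)^2 * tau i)" .
  qed
  also have "\<dots> = 2 / (real mm - 1) * (\<Sum>i<a. (cc i)^2 * tau i)" by (simp add: sum_distrib_left)
  finally show "expectation (\<lambda>\<omega>. (S1 \<omega>)^2) + expectation (\<lambda>\<omega>. (S2 \<omega>)^2) \<le> 2 / (real mm - 1) * (\<Sum>i<a. (cc i)^2 * tau i)" .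
qed

end



context setting begin

lemma prob_bound:
  assumes eps: "\<epsilon> > 0"
  shows "measure M {\<omega> \<in> space M.
      \<bar>((\<Sum>i<a. real (\<Sum>i'<a. n i') / real (n i) * TW i i *
             A1 d (n i) TS (\<lambda>j l. X i j l \<omega>))
        - (\<Sum>i<a. real (\<Sum>i'<a. n i') / real (n i) * TW i i *
             mat_tr_prod d TS (Sigma i)))
       / sqrt (2 * mat_trace (block_index a d)
            (let TV = mat_mult (block_index a d) (kron TW TS)
                        (blockdiag (\<lambda>i l m. real (\<Sum>i'<a. n i') / real (n i) * Sigma i l m))
             in mat_mult (block_index a d) TV TV))\<bar> > \<epsilon>}
    \<le> 4 / (\<epsilon>^2 * (real (Min (n ` {..<a})) - 1))"
proof -
  define Tr where "Tr = mat_trace BI (mat_mult BI TVm TVm)"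
  have r1: "((\<Sum>i<a. real (\<Sum>i'<a. n i') / real (n i) * TW i i * A1 d (n i) TS (\<lambda>j l. X i j l \<omega>))
        - (\<Sum>i<a. real (\<Sum>i'<a. n i') / real (n i) * TW i i * mat_tr_prod d TS (Sigma i))) = S1 \<omega> - S2 \<omega>" for \<omega>
    using Z_eq[of \<omega>] unfolding vv_def .
  have r2: "mat_trace (block_index a d)
            (let TV = mat_mult (block_index a d) (kron TW TS)
                        (blockdiag (\<lambda>i l m. real (\<Sum>i'<a. n i') / real (n i) * Sigma i l m))
             in mat_mult (block_index a d) TV TV) = Tr"
    unfolding Tr_def TVm_def BI_def vv_def Let_def ..
  have mmr: "real mm \<ge> 2" using mm_ge2 by simp
  have bpos: "4 / (\<epsilon>^2 * (real mm - 1)) \<ge> 0" using mmr eps by simp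
  have C: "Tr \<ge> (\<Sum>i<a. (cc i)^2 * tau i)" unfolding Tr_def cc_def using den_lb by simp
  have C0: "(\<Sum>i<a. (cc i)^2 * tau i) \<ge> 0" using tau_nonneg by (intro sum_nonneg) simp
  let ?E = "{\<omega> \<in> space M. \<bar>(S1 \<omega> - S2 \<omega>) / sqrt (2 * Tr)\<bar> > \<epsilon>}"
  have "measure M ?E \<le> 4 / (\<epsilon>^2 * (real mm - 1))"
  proof (cases "Tr = 0")
    case True
    then have e: "?E = {}" using eps by auto
    show ?thesis unfolding e using bpos by simp
  next
    case False
    then have Tp: "Tr > 0" using C C0 by simp
    define s where "s = sqrt (2 * Tr)"
    have sp: "s > 0" unfolding s_def using Tp by simp
    define r where "r = \<epsilon> * s / 2"
    have rp: "r > 0" unfolding r_def using sp eps by simp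
    have m1: "S1 \<in> borel_measurable M" using S1_int by (rule borel_measurable_integrable)
    note m2 = S2_meas
    let ?A = "{\<omega> \<in> space M. \<bar>S1 \<omega>\<bar> \<ge> r}"
    let ?B = "{\<omega> \<in> space M. \<bar>S2 \<omega>\<bar> \<ge> r}"
    have As: "?A \<in> sets M" using m1 by measurable
    have Bs: "?B \<in> sets M" using m2 by measurable
    have sub: "?E \<subseteq> ?A \<union> ?B"
    proof
      fix \<omega> assume w: "\<omega> \<in> ?E"
      then have "\<epsilon> < \<bar>S1 \<omega> - S2 \<omega>\<bar> / s" unfolding s_def using sp by (simp add: abs_divide s_def)
      then have "\<epsilon> * s < \<bar>S1 \<omega> - S2 \<omega>\<bar>" using sp by (simp add: pos_less_divide_eq)
      then have "2 * r < \<bar>S1 \<omega>\<bar> + \<bar>S2 \<omega>\<bar>" unfolding r_def by linarith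
      then have "r \<le> \<bar>S1 \<omega>\<bar> \<or> r \<le> \<bar>S2 \<omega>\<bar>" by linarith
      then show "\<omega> \<in> ?A \<union> ?B" using w by auto
    qed
    have "measure M ?E \<le> measure M (?A \<union> ?B)"
      using sub As Bs by (intro finite_measure_mono) auto
    also have "\<dots> \<le> measure M ?A + measure M ?B" using As Bs by (rule measure_Un_le)
    also have "\<dots> \<le> expectation (\<lambda>\<omega>. (S1 \<omega>)^2) / r^2 + expectation (\<lambda>\<omega>. (S2 \<omega>)^2) / r^2"
      using second_moment_method[OF m1 ES(1) rp] second_moment_method[OF m2 ES(2) rp] by simp
    also have "\<dots> = (expectation (\<lambda>\<omega>. (S1 \<omega>)^2) + expectation (\<lambda>\<omega>. (S2 \<omega>)^2)) / r^2"
      by (simp add: add_divide_distrib)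
    also have "\<dots> \<le> (2 / (real mm - 1) * Tr) / r^2"
    proof (rule divide_right_mono)
      have "2 / (real mm - 1) * (\<Sum>i<a. (cc i)^2 * tau i) \<le> 2 / (real mm - 1) * Tr"
        using C mmr by (intro mult_left_mono) auto
      then show "expectation (\<lambda>\<omega>. (S1 \<omega>)^2) + expectation (\<lambda>\<omega>. (S2 \<omega>)^2) \<le> 2 / (real mm - 1) * Tr"
        using ES(3) by linarith
    qed simp
    also have "r^2 = \<epsilon>^2 * Tr / 2"
      unfolding r_def s_def using Tp by (simp add: power_mult_distrib power_divide)
    also have "(2 / (real mm - 1) * Tr) / (\<epsilon>^2 * Tr / 2) = 4 / (\<epsilon>^2 * (real mm - 1))"
      using Tp eps mmr by (simp add: field_simps)
    finally show ?thesis .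
  qed
  then show ?thesis unfolding r1 r2 mm_def .
qed

end

theorem lemmaA11:
  fixes M :: "nat \<Rightarrow> 'w measure"
    and a d :: "nat \<Rightarrow> nat"
    and n :: "nat \<Rightarrow> nat \<Rightarrow> nat"
    and X :: "nat \<Rightarrow> nat \<Rightarrow> nat \<Rightarrow> nat \<Rightarrow> 'w \<Rightarrow> real"
    and mu :: "nat \<Rightarrow> nat \<Rightarrow> nat \<Rightarrow> real"
    and Sigma :: "nat \<Rightarrow> nat \<Rightarrow> nat \<Rightarrow> nat \<Rightarrow> real"
    and TW TS :: "nat \<Rightarrow> nat \<Rightarrow> nat \<Rightarrow> real"
  assumes prob: "\<And>k. prob_space (M k)"
    and a_pos: "\<And>k. a k \<ge> 1"
    and d_pos: "\<And>k. d k \<ge> 1"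
    and n_ge2: "\<And>k i. i < a k \<Longrightarrow> n k i \<ge> 2"
    and Sigma_pd: "\<And>k i. i < a k \<Longrightarrow> sym_posdef (d k) (Sigma k i)"
    and TW: "\<And>k. sym_idem (a k) (TW k)"
    and TS: "\<And>k. sym_idem (d k) (TS k)"
    and normal: "\<And>k i j. i < a k \<Longrightarrow> j < n k i \<Longrightarrow>
        mvn_distributed (M k) (d k) (\<lambda>l. X k i j l) (mu k i) (Sigma k i)"
    and indep: "\<And>k. prob_space.indep_vars (M k) (\<lambda>_. PiM {..<d k} (\<lambda>_. borel))
        (\<lambda>(i, j) \<omega>. \<lambda>l\<in>{..<d k}. X k i j l \<omega>) {(i, j). i < a k \<and> j < n k i}"
    and min_n: "filterlim (\<lambda>k. Min (n k ` {..<a k})) at_top sequentially"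
  shows "\<forall>\<epsilon>>0. (\<lambda>k. measure (M k) {\<omega> \<in> space (M k).
      \<bar>((\<Sum>i<a k. real (\<Sum>i'<a k. n k i') / real (n k i) * TW k i i *
             A1 (d k) (n k i) (TS k) (\<lambda>j l. X k i j l \<omega>))
        - (\<Sum>i<a k. real (\<Sum>i'<a k. n k i') / real (n k i) * TW k i i *
             mat_tr_prod (d k) (TS k) (Sigma k i)))
       / sqrt (2 * mat_trace (block_index (a k) (d k))
            (let TV = mat_mult (block_index (a k) (d k)) (kron (TW k) (TS k))
                        (blockdiag (\<lambda>i l m. real (\<Sum>i'<a k. n k i') / real (n k i) * Sigma k i l m))
             in mat_mult (block_index (a k) (d k)) TV TV))\<bar> > \<epsilon>})
    \<longlonglongrightarrow> 0"
proof (intro allI impI)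
  fix \<epsilon> :: real assume eps: "\<epsilon> > 0"
  have S: "setting (M k) (a k) (d k) (n k) (X k) (mu k) (Sigma k) (TW k) (TS k)" for k
    unfolding setting_def setting_axioms_def using prob a_pos d_pos n_ge2 Sigma_pd TW TS normal indep by auto
  define m where "m k = real (Min (n k ` {..<a k}))" for k
  have m2: "m k \<ge> 2" for k
  proof -
    have "Min (n k ` {..<a k}) \<in> n k ` {..<a k}" using a_pos[of k] by (intro Min_in) (auto simp: lessThan_empty_iff)
    then show ?thesis unfolding m_def using n_ge2 by force
  qed
  have lim: "(\<lambda>k. 4 / (\<epsilon>^2 * (m k - 1))) \<longlonglongrightarrow> 0"
  proof (rule tendsto_divide_0[OF tendsto_const])
    have "filterlim m at_top sequentially"
      unfolding m_def by (rule filterlim_compose[OF filterlim_real_sequentially min_n])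
    then have "filterlim (\<lambda>k. -1 + m k) at_top sequentially"
      by (rule filterlim_tendsto_add_at_top[OF tendsto_const])
    then have "filterlim (\<lambda>k. \<epsilon>^2 * (-1 + m k)) at_top sequentially"
      using eps by (intro filterlim_tendsto_pos_mult_at_top[OF tendsto_const]) auto
    then show "filterlim (\<lambda>k. \<epsilon>^2 * (m k - 1)) at_infinity sequentially"
      by (intro filterlim_at_top_imp_at_infinity) simp
  qed
  show "(\<lambda>k. measure (M k) {\<omega> \<in> space (M k).
      \<bar>((\<Sum>i<a k. real (\<Sum>i'<a k. n k i') / real (n k i) * TW k i i *
             A1 (d k) (n k i) (TS k) (\<lambda>j l. X k i j l \<omega>))
        - (\<Sum>i<a k. real (\<Sum>i'<a k. n k i') / real (n k i) * TW k i i *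
             mat_tr_prod (d k) (TS k) (Sigma k i)))
       / sqrt (2 * mat_trace (block_index (a k) (d k))
            (let TV = mat_mult (block_index (a k) (d k)) (kron (TW k) (TS k))
                        (blockdiag (\<lambda>i l m. real (\<Sum>i'<a k. n k i') / real (n k i) * Sigma k i l m))
             in mat_mult (block_index (a k) (d k)) TV TV))\<bar> > \<epsilon>})
    \<longlonglongrightarrow> 0"
  proof (rule tendsto_sandwich[OF _ _ tendsto_const lim])
    show "\<forall>\<^sub>F k in sequentially. 0 \<le> measure (M k) {\<omega> \<in> space (M k).
      \<bar>((\<Sum>i<a k. real (\<Sum>i'<a k. n k i') / real (n k i) * TW k i i *
             A1 (d k) (n k i) (TS k) (\<lambda>j l. X k i j l \<omega>))
        - (\<Sum>i<a k. real (\<Sum>i'<a k. n k i') / real (n k i) * TW k i i *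
             mat_tr_prod (d k) (TS k) (Sigma k i)))
       / sqrt (2 * mat_trace (block_index (a k) (d k))
            (let TV = mat_mult (block_index (a k) (d k)) (kron (TW k) (TS k))
                        (blockdiag (\<lambda>i l m. real (\<Sum>i'<a k. n k i') / real (n k i) * Sigma k i l m))
             in mat_mult (block_index (a k) (d k)) TV TV))\<bar> > \<epsilon>}"
      by simp
    show "\<forall>\<^sub>F k in sequentially. measure (M k) {\<omega> \<in> space (M k).
      \<bar>((\<Sum>i<a k. real (\<Sum>i'<a k. n k i') / real (n k i) * TW k i i *
             A1 (d k) (n k i) (TS k) (\<lambda>j l. X k i j l \<omega>))
        - (\<Sum>i<a k. real (\<Sum>i'<a k. n k i') / real (n k i) * TW k i i *
             mat_tr_prod (d k) (TS k) (Sigma k i)))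
       / sqrt (2 * mat_trace (block_index (a k) (d k))
            (let TV = mat_mult (block_index (a k) (d k)) (kron (TW k) (TS k))
                        (blockdiag (\<lambda>i l m. real (\<Sum>i'<a k. n k i') / real (n k i) * Sigma k i l m))
             in mat_mult (block_index (a k) (d k)) TV TV))\<bar> > \<epsilon>} \<le> 4 / (\<epsilon>^2 * (m k - 1))"
      unfolding m_def using setting.prob_bound[OF S eps] by simp
  qed
qed



end
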